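(* Up to a sequence of orthogonal transformations on the Gaussian ensemble noise vectors (which preserve their joint law), the sample variances of the EnKF satisfy $$\widehat p_n=\Big(\frac{p_n}{1+Sp_n}\Big)^2\frac SN\,\widehat\chi^{(n)},\qquad p_{n+1}=\frac RN\,\chi^{(n+1)},\qquad p_0=\frac{P_0}N\chi^{(0)},$$ where $\chi^{(0)}$ is a (central) $\chi$-square variable with $N$ degrees of freedom and, conditionally on the past, $\widehat\chi^{(n)}$ is a non-central $\chi$-square variable with $N$ degrees of freedom and non-centrality parameter $N/(Sp_n)$, and $\chi^{(n+1)}$ is a non-central $\chi$-square variable with $N$ degrees of freedom and non-centrality parameter $N(A^2/R)\widehat p_n$, these $\chi$-square variables being (conditionally) independent of one another and independent of the local mean perturbations $\upsilon_0$, $(\widehat\upsilon_k,\upsilon_{k+1})_{k\ge0}$.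
   Context: Model: nonzero reals $A,B,C,D$, $R:=B^2$, $S:=(C/D)^2$; $(V_n),(W_n)$ i.i.d. $N(0,1)$, $X_0\sim N(\widehat X_0^-,P_0)$ ($P_0>0$) independent, $X_{n+1}=AX_n+BW_{n+1}$, $Y_n=CX_n+DV_n$. EnKF with $N+1$ particles: $\xi^i_0$ i.i.d. copies of $X_0$; independent i.i.d. $N(0,1)$ families $(V^i_n),(W^i_n)$ independent of the model; $m_n$ sample mean, $p_n:=\frac1N\sum_{i=1}^{N+1}(\xi^i_n-m_n)^2$, $g_n:=Cp_n/(C^2p_n+D^2)$, $\widehat\xi^i_n:=\xi^i_n+g_n(Y_n-C\xi^i_n-DV^i_n)$, with sample mean $\widehat m_n$ and $\widehat p_n:=\frac1N\sum_i(\widehat\xi^i_n-\widehat m_n)^2$, $\xi^i_{n+1}:=A\widehat\xi^i_n+BW^i_{n+1}$. Mean perturbations: $\upsilon_0:=\sqrt{N+1}(m_0-\widehat X_0^-)$, $\widehat\upsilon_n:=\sqrt{N+1}(\widehat m_n-m_n-g_n(Y_n-Cm_n))$, $\upsilon_{n+1}:=\sqrt{N+1}(m_{n+1}-A\widehat m_n)$. A non-central $\chi$-square variable with $N$ degrees of freedom and non-centrality $Nx$ has the law of $\sum_{i=1}^N(Z_i+\sqrt x)^2$, $Z_i$ i.i.d. $N(0,1)$. *)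

theory Defs
  imports "HOL-Probability.Probability"
begin

(* Indices of the primitive random sources:
   SX0 = X_0, SV n = V_n, SW n = W_n (n >= 1), SXi i = xi^i_0,
   SEV n i = V^i_n, SEW n i = W^i_n (n >= 1).  Particles are indexed 0..N. *)
datatype src = SX0 | SV nat | SW nat | SXi nat | SEV nat nat | SEW nat nat

(* Indices of the output family:
   IZ0 i   : i-th Gaussian in chi^(0)
   IZh n i : i-th Gaussian in hat chi^(n)
   IZ n i  : i-th Gaussian in chi^(n+1)
   IU0     : upsilon_0
   IEta n  : normalised ensemble observation-noise mean (hat upsilon_n = - g_n D eta_n)
   IU n    : upsilon_(n+1) *)
datatype zidx = IZ0 nat | IZh nat nat | IZ nat nat | IU0 | IEta nat | IU nat

definition smean :: "nat \<Rightarrow> (nat \<Rightarrow> real) \<Rightarrow> real" where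
  "smean N x = (\<Sum>i<Suc N. x i) / real (Suc N)"

definition svar :: "nat \<Rightarrow> (nat \<Rightarrow> real) \<Rightarrow> real" where
  "svar N x = (\<Sum>i<Suc N. (x i - smean N x)^2) / real N"

definition gain :: "real \<Rightarrow> real \<Rightarrow> real \<Rightarrow> real" where
  "gain C D p = C * p / (C^2 * p + D^2)"

definition enkf_update :: "nat \<Rightarrow> real \<Rightarrow> real \<Rightarrow> real \<Rightarrow> (nat \<Rightarrow> real) \<Rightarrow> (nat \<Rightarrow> real) \<Rightarrow> nat \<Rightarrow> real" where
  "enkf_update N C D y v x = (\<lambda>i. x i + gain C D (svar N x) * (y - C * x i - D * v i))"

fun model_X :: "real \<Rightarrow> real \<Rightarrow> ('a \<Rightarrow> real) \<Rightarrow> (nat \<Rightarrow> 'a \<Rightarrow> real) \<Rightarrow> nat \<Rightarrow> 'a \<Rightarrow> real" where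
  "model_X A B X0 W 0 \<omega> = X0 \<omega>"
| "model_X A B X0 W (Suc n) \<omega> = A * model_X A B X0 W n \<omega> + B * W (Suc n) \<omega>"

definition model_Y :: "real \<Rightarrow> real \<Rightarrow> real \<Rightarrow> real \<Rightarrow> ('a \<Rightarrow> real) \<Rightarrow> (nat \<Rightarrow> 'a \<Rightarrow> real)
    \<Rightarrow> (nat \<Rightarrow> 'a \<Rightarrow> real) \<Rightarrow> nat \<Rightarrow> 'a \<Rightarrow> real" where
  "model_Y A B C D X0 W V n \<omega> = C * model_X A B X0 W n \<omega> + D * V n \<omega>"

fun enkf_xi :: "nat \<Rightarrow> real \<Rightarrow> real \<Rightarrow> real \<Rightarrow> real \<Rightarrow> (nat \<Rightarrow> real) \<Rightarrow> (nat \<Rightarrow> real)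
    \<Rightarrow> (nat \<Rightarrow> nat \<Rightarrow> real) \<Rightarrow> (nat \<Rightarrow> nat \<Rightarrow> real) \<Rightarrow> nat \<Rightarrow> nat \<Rightarrow> real" where
  "enkf_xi N A B C D xi0 Y EV EW 0 = xi0"
| "enkf_xi N A B C D xi0 Y EV EW (Suc n) =
     (\<lambda>i. A * enkf_update N C D (Y n) (EV n) (enkf_xi N A B C D xi0 Y EV EW n) i + B * EW (Suc n) i)"


definition ens_xi where
  "ens_xi N A B C D X0 V W xi0 EV EW n \<omega> =
     enkf_xi N A B C D (\<lambda>i. xi0 i \<omega>) (\<lambda>k. model_Y A B C D X0 W V k \<omega>)
       (\<lambda>k i. EV k i \<omega>) (\<lambda>k i. EW k i \<omega>) n"

definition ens_xih where
  "ens_xih N A B C D X0 V W xi0 EV EW n \<omega> =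
     enkf_update N C D (model_Y A B C D X0 W V n \<omega>) (\<lambda>i. EV n i \<omega>)
       (ens_xi N A B C D X0 V W xi0 EV EW n \<omega>)"

definition ens_m where "ens_m N A B C D X0 V W xi0 EV EW n \<omega> = smean N (ens_xi N A B C D X0 V W xi0 EV EW n \<omega>)"
definition ens_mh where "ens_mh N A B C D X0 V W xi0 EV EW n \<omega> = smean N (ens_xih N A B C D X0 V W xi0 EV EW n \<omega>)"
definition ens_p where "ens_p N A B C D X0 V W xi0 EV EW n \<omega> = svar N (ens_xi N A B C D X0 V W xi0 EV EW n \<omega>)"
definition ens_ph where "ens_ph N A B C D X0 V W xi0 EV EW n \<omega> = svar N (ens_xih N A B C D X0 V W xi0 EV EW n \<omega>)"
definition ens_g where "ens_g N A B C D X0 V W xi0 EV EW n \<omega> = gain C D (ens_p N A B C D X0 V W xi0 EV EW n \<omega>)"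

(* mean perturbations: upsilon_0, hat upsilon_n, and ens_u n = upsilon_(n+1) *)
definition ens_u0 where
  "ens_u0 N A B C D Xh0 X0 V W xi0 EV EW \<omega> =
     sqrt (real (Suc N)) * (ens_m N A B C D X0 V W xi0 EV EW 0 \<omega> - Xh0)"
definition ens_uh where
  "ens_uh N A B C D X0 V W xi0 EV EW n \<omega> =
     sqrt (real (Suc N)) * (ens_mh N A B C D X0 V W xi0 EV EW n \<omega> - ens_m N A B C D X0 V W xi0 EV EW n \<omega>
       - ens_g N A B C D X0 V W xi0 EV EW n \<omega> * (model_Y A B C D X0 W V n \<omega> - C * ens_m N A B C D X0 V W xi0 EV EW n \<omega>))"
definition ens_u where
  "ens_u N A B C D X0 V W xi0 EV EW n \<omega> =
     sqrt (real (Suc N)) * (ens_m N A B C D X0 V W xi0 EV EW (Suc n) \<omega> - A * ens_mh N A B C D X0 V W xi0 EV EW n \<omega>)"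

end

theory Submission
  imports Defs
begin


lemma lborel_shear2:
  fixes s :: real
  shows "distr (lborel \<Otimes>\<^sub>M lborel) (borel \<Otimes>\<^sub>M borel) (\<lambda>(u,v). (u, v + s * u)) = lborel \<Otimes>\<^sub>M lborel"
proof (rule measure_eqI)
  show "sets (distr (lborel \<Otimes>\<^sub>M lborel) (borel \<Otimes>\<^sub>M borel) (\<lambda>(u,v). (u, v + s * u))) = sets (lborel \<Otimes>\<^sub>M lborel)"
    by simp
  fix A assume A: "A \<in> sets (distr (lborel \<Otimes>\<^sub>M lborel) (borel \<Otimes>\<^sub>M borel) (\<lambda>(u,v). (u, v + s * u)))"
  then have A': "A \<in> sets (lborel \<Otimes>\<^sub>M (lborel::real measure))" by simp
  have mT: "(\<lambda>(u,v). (u, v + s * u)) \<in> measurable (lborel \<Otimes>\<^sub>M lborel) (borel \<Otimes>\<^sub>M (borel::real measure))"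
    by measurable
  have "emeasure (distr (lborel \<Otimes>\<^sub>M lborel) (borel \<Otimes>\<^sub>M borel) (\<lambda>(u,v). (u, v + s * u))) A
     = emeasure (lborel \<Otimes>\<^sub>M lborel) ((\<lambda>(u,v). (u, v + s * u)) -` A \<inter> space (lborel \<Otimes>\<^sub>M lborel))"
    using A by (simp add: emeasure_distr[OF mT])
  also have "\<dots> = (\<integral>\<^sup>+u. emeasure lborel (Pair u -` ((\<lambda>(u,v). (u, v + s * u)) -` A \<inter> space (lborel \<Otimes>\<^sub>M lborel))) \<partial>lborel)"
    by (rule lborel.emeasure_pair_measure_alt) (use measurable_sets[OF mT] A in \<open>auto\<close>)
  also have "\<dots> = (\<integral>\<^sup>+u. emeasure lborel (Pair u -` A) \<partial>lborel)"
  proof (rule nn_integral_cong)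
    fix u :: real
    have mP: "Pair u -` A \<in> sets borel" using A' by (auto intro: sets_Pair1)
    have eq: "Pair u -` ((\<lambda>(u,v). (u, v + s * u)) -` A \<inter> space (lborel \<Otimes>\<^sub>M lborel))
        = (+) (s * u) -` (Pair u -` A) \<inter> space lborel"
      by (auto simp: space_pair_measure add.commute)
    show "emeasure lborel (Pair u -` ((\<lambda>(u,v). (u, v + s * u)) -` A \<inter> space (lborel \<Otimes>\<^sub>M lborel))) = emeasure lborel (Pair u -` A)"
      unfolding eq
      by (subst emeasure_distr[symmetric, where N=borel]) (use mP in \<open>auto simp: lborel_distr_plus\<close>)
  qed
  also have "\<dots> = emeasure (lborel \<Otimes>\<^sub>M lborel) A"
    by (rule lborel.emeasure_pair_measure_alt[symmetric]) (use A' in auto)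
  finally show "emeasure (distr (lborel \<Otimes>\<^sub>M lborel) (borel \<Otimes>\<^sub>M borel) (\<lambda>(u,v). (u, v + s * u))) A = emeasure (lborel \<Otimes>\<^sub>M lborel) A" .
qed

lemma lborel_shear1:
  fixes s :: real
  shows "distr (lborel \<Otimes>\<^sub>M lborel) (borel \<Otimes>\<^sub>M borel) (\<lambda>(u,v). (u + s * v, v)) = lborel \<Otimes>\<^sub>M lborel"
proof (rule measure_eqI)
  show "sets (distr (lborel \<Otimes>\<^sub>M lborel) (borel \<Otimes>\<^sub>M borel) (\<lambda>(u,v). (u + s * v, v))) = sets (lborel \<Otimes>\<^sub>M lborel)"
    by simp
  fix A assume A: "A \<in> sets (distr (lborel \<Otimes>\<^sub>M lborel) (borel \<Otimes>\<^sub>M borel) (\<lambda>(u,v). (u + s * v, v)))"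
  then have A': "A \<in> sets (lborel \<Otimes>\<^sub>M (lborel::real measure))" by simp
  have mT: "(\<lambda>(u,v). (u + s * v, v)) \<in> measurable (lborel \<Otimes>\<^sub>M lborel) (borel \<Otimes>\<^sub>M (borel::real measure))"
    by measurable
  have "emeasure (distr (lborel \<Otimes>\<^sub>M lborel) (borel \<Otimes>\<^sub>M borel) (\<lambda>(u,v). (u + s * v, v))) A
     = emeasure (lborel \<Otimes>\<^sub>M lborel) ((\<lambda>(u,v). (u + s * v, v)) -` A \<inter> space (lborel \<Otimes>\<^sub>M lborel))"
    using A by (simp add: emeasure_distr[OF mT])
  also have "\<dots> = (\<integral>\<^sup>+v. emeasure lborel ((\<lambda>u. (u, v)) -` ((\<lambda>(u,v). (u + s * v, v)) -` A \<inter> space (lborel \<Otimes>\<^sub>M lborel))) \<partial>lborel)"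
    by (rule lborel_pair.emeasure_pair_measure_alt2) (use measurable_sets[OF mT] A in \<open>auto\<close>)
  also have "\<dots> = (\<integral>\<^sup>+v. emeasure lborel ((\<lambda>u. (u, v)) -` A) \<partial>lborel)"
  proof (rule nn_integral_cong)
    fix v :: real
    have mP: "(\<lambda>u. (u, v)) -` A \<in> sets borel" using A' by (auto intro: sets_Pair2)
    have eq: "(\<lambda>u. (u, v)) -` ((\<lambda>(u,v). (u + s * v, v)) -` A \<inter> space (lborel \<Otimes>\<^sub>M lborel))
        = (+) (s * v) -` ((\<lambda>u. (u, v)) -` A) \<inter> space lborel"
      by (auto simp: space_pair_measure add.commute)
    show "emeasure lborel ((\<lambda>u. (u, v)) -` ((\<lambda>(u,v). (u + s * v, v)) -` A \<inter> space (lborel \<Otimes>\<^sub>M lborel))) = emeasure lborel ((\<lambda>u. (u, v)) -` A)"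
      unfolding eq
      by (subst emeasure_distr[symmetric, where N=borel]) (use mP in \<open>auto simp: lborel_distr_plus\<close>)
  qed
  also have "\<dots> = emeasure (lborel \<Otimes>\<^sub>M lborel) A"
    by (rule lborel_pair.emeasure_pair_measure_alt2[symmetric]) (use A' in auto)
  finally show "emeasure (distr (lborel \<Otimes>\<^sub>M lborel) (borel \<Otimes>\<^sub>M borel) (\<lambda>(u,v). (u + s * v, v))) A = emeasure (lborel \<Otimes>\<^sub>M lborel) A" .
qed

lemma lborel_neg2:
  "distr (lborel \<Otimes>\<^sub>M lborel) (borel \<Otimes>\<^sub>M borel) (\<lambda>(u,v). (a * u, b * v)) = lborel \<Otimes>\<^sub>M (lborel :: real measure)"
  if "a \<in> {-1,1}" "b \<in> {-1,1}" for a b :: real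
proof -
  have da: "distr lborel borel ((*) c) = (lborel :: real measure)" if "c \<in> {-1,1}" for c :: real
  proof -
    have "(*) c = uminus \<or> (*) c = (\<lambda>x::real. x)" using that by auto
    then show ?thesis using lborel_distr_uminus distr_id2[of borel lborel] by auto
  qed
  have "distr lborel borel ((*) a) \<Otimes>\<^sub>M distr lborel borel ((*) b) =
     distr (lborel \<Otimes>\<^sub>M lborel) (borel \<Otimes>\<^sub>M borel) (\<lambda>(u,v). (a * u, b * v))"
    by (rule pair_measure_distr) (auto simp: da[OF that(2)] intro: sigma_finite_lborel)
  then show ?thesis using da that by simp
qed

lemma lborel_rot2:
  fixes P Q :: real
  assumes PQ: "P\<^sup>2 + Q\<^sup>2 = 1"
  shows "distr (lborel \<Otimes>\<^sub>M lborel) (borel \<Otimes>\<^sub>M borel) (\<lambda>(u,v). (P * u - Q * v, Q * u + P * v)) = lborel \<Otimes>\<^sub>M lborel"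
proof (cases "P = -1")
  case True
  then have "Q = 0" using PQ by (simp add: power2_eq_square)
  then show ?thesis using True lborel_neg2[of "-1" "-1"] by simp
next
  case False
  define t where "t = - Q / (1 + P)"
  have P1: "1 + P \<noteq> 0" using False by linarith
  define sh1 where "sh1 = (\<lambda>(u::real,v::real). (u + t * v, v))"
  define sh2 where "sh2 = (\<lambda>(u::real,v::real). (u, v + Q * u))"
  have m1[measurable]: "sh1 \<in> measurable (borel \<Otimes>\<^sub>M borel) (borel \<Otimes>\<^sub>M borel)" unfolding sh1_def by measurable
  have m2[measurable]: "sh2 \<in> measurable (borel \<Otimes>\<^sub>M borel) (borel \<Otimes>\<^sub>M borel)" unfolding sh2_def by measurable
  have eq: "(\<lambda>(u,v). (P * u - Q * v, Q * u + P * v)) = sh1 \<circ> sh2 \<circ> sh1"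
  proof
    fix x :: "real \<times> real"
    obtain u v where x: "x = (u,v)" by force
    have a: "1 + Q * t = P"
    proof -
      have "1 + Q * t = ((1 + P) - Q\<^sup>2) / (1 + P)" using P1 by (simp add: t_def field_simps power2_eq_square)
      also have "\<dots> = ((1 + P) * P) / (1 + P)" using PQ by (simp add: algebra_simps power2_eq_square)
      finally show ?thesis using P1 by simp
    qed
    have b: "t * (1 + P) = - Q"
      using P1 by (simp add: t_def field_simps)
    show "(\<lambda>(u,v). (P * u - Q * v, Q * u + P * v)) x = (sh1 \<circ> sh2 \<circ> sh1) x"
    proof -
      have e1: "u + t * v + t * (v + Q * (u + t * v)) = (1 + Q*t) * u + (t * (1 + (1 + Q*t))) * v"
        by (simp add: algebra_simps)
      have e2: "v + Q * (u + t * v) = Q * u + (1 + Q * t) * v"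
        by (simp add: algebra_simps)
      show ?thesis unfolding x sh1_def sh2_def
        using e1 e2 unfolding a b by simp
    qed
  qed
  have s1: "distr (lborel \<Otimes>\<^sub>M lborel) (borel \<Otimes>\<^sub>M borel) sh1 = lborel \<Otimes>\<^sub>M lborel"
    unfolding sh1_def by (rule lborel_shear1)
  have s2: "distr (lborel \<Otimes>\<^sub>M lborel) (borel \<Otimes>\<^sub>M borel) sh2 = lborel \<Otimes>\<^sub>M lborel"
    unfolding sh2_def by (rule lborel_shear2)
  have "distr (lborel \<Otimes>\<^sub>M lborel) (borel \<Otimes>\<^sub>M borel) (sh1 \<circ> sh2 \<circ> sh1)
      = distr (distr (distr (lborel \<Otimes>\<^sub>M lborel) (borel \<Otimes>\<^sub>M borel) sh1) (borel \<Otimes>\<^sub>M borel) sh2) (borel \<Otimes>\<^sub>M borel) sh1"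
    by (subst distr_distr; (subst distr_distr)?) (auto simp: comp_assoc)
  also have "\<dots> = lborel \<Otimes>\<^sub>M lborel"
    by (simp add: s1 s2 cong: distr_cong)
  finally show ?thesis by (simp add: eq)
qed

definition N01 :: "real measure" where "N01 = density lborel (\<lambda>x. ennreal (std_normal_density x))"

lemma prob_space_N01: "prob_space N01"
  unfolding N01_def using real_dist_normal_dist by (simp add: real_distribution_def)

lemma sets_N01[simp, measurable_cong]: "sets N01 = sets borel" and space_N01[simp]: "space N01 = UNIV"
  by (simp_all add: N01_def)

lemma std_normal_density_rot:
  fixes a b u v :: real
  assumes "a\<^sup>2 + b\<^sup>2 = u\<^sup>2 + v\<^sup>2"
  shows "std_normal_density a * std_normal_density b = std_normal_density u * std_normal_density v"
proof -
  have "std_normal_density a * std_normal_density b = (1 / sqrt (2 * pi))\<^sup>2 * exp (- (a\<^sup>2 + b\<^sup>2) / 2)"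
    by (simp add: std_normal_density_def power2_eq_square exp_add[symmetric] field_simps)
  also have "\<dots> = std_normal_density u * std_normal_density v"
    unfolding assms by (simp add: std_normal_density_def power2_eq_square exp_add[symmetric] field_simps)
  finally show ?thesis .
qed

lemma gauss2:
  fixes P Q e :: real
  assumes PQ: "P\<^sup>2 + Q\<^sup>2 = 1" and e: "e \<in> {-1,1}"
  shows "distr (N01 \<Otimes>\<^sub>M N01) (borel \<Otimes>\<^sub>M borel) (\<lambda>(u,v). (P * u - Q * v, e * (Q * u + P * v))) = N01 \<Otimes>\<^sub>M N01"
proof -
  define T where "T = (\<lambda>(u::real,v::real). (P * u - Q * v, e * (Q * u + P * v)))"
  define f where "f = (\<lambda>(x::real,y::real). ennreal (std_normal_density x) * ennreal (std_normal_density y))"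
  have mT[measurable]: "T \<in> measurable (borel \<Otimes>\<^sub>M borel) (borel \<Otimes>\<^sub>M borel)" unfolding T_def by measurable
  have mf[measurable]: "f \<in> borel_measurable (borel \<Otimes>\<^sub>M borel)" unfolding f_def by measurable
  have L: "distr (lborel \<Otimes>\<^sub>M lborel) (borel \<Otimes>\<^sub>M borel) T = lborel \<Otimes>\<^sub>M lborel"
  proof -
    have "T = (\<lambda>(u,v). (1 * u, e * v)) \<circ> (\<lambda>(u,v). (P * u - Q * v, Q * u + P * v))"
      by (auto simp: T_def)
    then have "distr (lborel \<Otimes>\<^sub>M lborel) (borel \<Otimes>\<^sub>M borel) T =
      distr (distr (lborel \<Otimes>\<^sub>M lborel) (borel \<Otimes>\<^sub>M borel) (\<lambda>(u,v). (P * u - Q * v, Q * u + P * v))) (borel \<Otimes>\<^sub>M borel) (\<lambda>(u,v). (1 * u, e * v))"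
      by (simp add: distr_distr)
    also have "\<dots> = lborel \<Otimes>\<^sub>M lborel"
      using lborel_rot2[OF PQ] lborel_neg2[of 1 e] e by (simp cong: distr_cong)
    finally show ?thesis .
  qed
  have fT: "f (T x) = f x" for x
  proof -
    obtain u v where x: "x = (u,v)" by force
    have "(P * u - Q * v)\<^sup>2 + (e * (Q * u + P * v))\<^sup>2 = (P\<^sup>2 + Q\<^sup>2) * (u\<^sup>2 + v\<^sup>2)"
      using e by (auto simp: power2_eq_square algebra_simps)
    then have "std_normal_density (P * u - Q * v) * std_normal_density (e * (Q * u + P * v)) = std_normal_density u * std_normal_density v"
      using PQ by (intro std_normal_density_rot) simp
    then show ?thesis unfolding x T_def f_def by (simp add: ennreal_mult[symmetric])
  qed
  have NN: "N01 \<Otimes>\<^sub>M N01 = density (lborel \<Otimes>\<^sub>M lborel) f"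
    unfolding N01_def f_def
    by (rule pair_measure_density) (use prob_space_imp_sigma_finite[OF prob_space_N01[unfolded N01_def]] in \<open>auto intro: sigma_finite_lborel\<close>)
  have "distr (density (lborel \<Otimes>\<^sub>M lborel) f) (borel \<Otimes>\<^sub>M borel) T
      = distr (density (lborel \<Otimes>\<^sub>M lborel) (\<lambda>x. f (T x))) (borel \<Otimes>\<^sub>M borel) T"
    by (simp add: fT)
  also have "\<dots> = density (distr (lborel \<Otimes>\<^sub>M lborel) (borel \<Otimes>\<^sub>M borel) T) f"
    by (rule density_distr[symmetric]) auto
  also have "\<dots> = density (lborel \<Otimes>\<^sub>M lborel) f" by (simp add: L)
  finally show ?thesis unfolding NN T_def .
qed


definition gam :: "nat \<Rightarrow> (nat \<Rightarrow> real) measure" where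
  "gam N = PiM {..N} (\<lambda>_. N01)"

abbreviation BB :: "nat \<Rightarrow> (nat \<Rightarrow> real) measure" where
  "BB N \<equiv> PiM {..N} (\<lambda>_. borel)"

lemma sets_gam: "sets (gam N) = sets (BB N)"
  unfolding gam_def by (rule sets_PiM_cong) auto

lemma space_gam: "space (gam N) = space (BB N)"
  using sets_gam sets_eq_imp_space_eq by blast

lemma psf_N01: "product_sigma_finite (\<lambda>_::nat. N01)"
  by (simp add: product_sigma_finite_def prob_space_N01 prob_space_imp_sigma_finite)

lemmas N01p_emeasure_PiM = product_sigma_finite.emeasure_PiM[OF psf_N01]
lemmas N01p_PiM_eqI = product_sigma_finite.PiM_eqI[OF psf_N01]
lemmas N01p_distr_merge = product_sigma_finite.distr_merge[OF psf_N01]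

lemma prob_space_gam: "prob_space (gam N)"
  unfolding gam_def by (rule prob_space_PiM) (simp add: prob_space_N01)

definition orth2 :: "nat \<Rightarrow> nat \<Rightarrow> nat \<Rightarrow> real \<Rightarrow> real \<Rightarrow> real \<Rightarrow> (nat \<Rightarrow> real) \<Rightarrow> (nat \<Rightarrow> real)" where
  "orth2 N j k P Q e x = (\<lambda>i\<in>{..N}. if i = j then P * x j - Q * x k else if i = k then e * (Q * x j + P * x k) else x i)"

lemma orth2_measurable[measurable]:
  assumes "j \<le> N" "k \<le> N"
  shows "orth2 N j k P Q e \<in> measurable (BB N) (BB N)"
  unfolding orth2_def
  by (rule measurable_restrict) (use assms in auto)

lemma distr_pair_PiM2:
  fixes j k :: nat
  assumes "j \<noteq> k"
  shows "distr (PiM {j,k} (\<lambda>_. N01)) (borel \<Otimes>\<^sub>M borel) (\<lambda>y. (y j, y k)) = N01 \<Otimes>\<^sub>M N01"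
proof (rule pair_measure_eqI[symmetric])
  show "sigma_finite_measure N01" by (simp add: prob_space_N01 prob_space_imp_sigma_finite)
  then show "sigma_finite_measure N01" .
  show "sets (N01 \<Otimes>\<^sub>M N01) = sets (distr (PiM {j,k} (\<lambda>_. N01)) (borel \<Otimes>\<^sub>M borel) (\<lambda>y. (y j, y k)))"
    unfolding sets_distr by (rule sets_pair_measure_cong) simp_all
  fix A B assume A: "A \<in> sets N01" and B: "B \<in> sets N01"
  have m: "(\<lambda>y. (y j, y k)) \<in> measurable (PiM {j,k} (\<lambda>_. N01)) (borel \<Otimes>\<^sub>M borel)"
    by measurable
  have eq: "(\<lambda>y. (y j, y k)) -` (A \<times> B) \<inter> space (PiM {j,k} (\<lambda>_. N01)) = PiE {j,k} (\<lambda>i. if i = j then A else B)"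
    using assms by (auto simp: space_PiM PiE_iff)
  have "emeasure (distr (PiM {j,k} (\<lambda>_. N01)) (borel \<Otimes>\<^sub>M borel) (\<lambda>y. (y j, y k))) (A \<times> B)
     = emeasure (PiM {j,k} (\<lambda>_. N01)) (PiE {j,k} (\<lambda>i. if i = j then A else B))"
    using A B by (subst emeasure_distr[OF m]) (auto simp: eq)
  also have "\<dots> = emeasure N01 A * emeasure N01 B"
    using A B assms by (subst N01p_emeasure_PiM) auto
  finally show "emeasure N01 A * emeasure N01 B = emeasure (distr (PiM {j,k} (\<lambda>_. N01)) (borel \<Otimes>\<^sub>M borel) (\<lambda>y. (y j, y k))) (A \<times> B)"
    by simp
qed

lemma sf_PiM_N01: "finite K \<Longrightarrow> sigma_finite_measure (PiM K (\<lambda>_::nat. N01))"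
  by (rule product_sigma_finite.sigma_finite[OF psf_N01])

lemma sf_N01: "sigma_finite_measure N01"
  by (simp add: prob_space_N01 prob_space_imp_sigma_finite)

lemma orth2_mp:
  assumes jk: "j \<le> N" "k \<le> N" "j \<noteq> k" and PQ: "P\<^sup>2 + Q\<^sup>2 = 1" and e: "e \<in> {-1,1}"
  shows "distr (gam N) (BB N) (orth2 N j k P Q e) = gam N"
  unfolding gam_def
proof (rule N01p_PiM_eqI)
  show "finite {..N}" by simp
  show "sets (distr (PiM {..N} (\<lambda>_. N01)) (BB N) (orth2 N j k P Q e)) = sets (PiM {..N} (\<lambda>_. N01))"
    using sets_gam[of N] unfolding gam_def sets_distr by simp
  fix A assume A: "\<And>i. i \<in> {..N} \<Longrightarrow> A i \<in> sets N01"
  define K where "K = {j,k}"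
  define R where "R = {..N} - K"
  have KR: "K \<inter> R = {}" "K \<union> R = {..N}" "finite K" "finite R" using jk by (auto simp: K_def R_def)
  define rot where "rot = (\<lambda>(u::real,v::real). (P * u - Q * v, e * (Q * u + P * v)))"
  have mrot[measurable]: "rot \<in> measurable (borel \<Otimes>\<^sub>M borel) (borel \<Otimes>\<^sub>M borel)" unfolding rot_def by measurable
  define SK where "SK = {y \<in> space (PiM K (\<lambda>_. N01)). rot (y j, y k) \<in> A j \<times> A k}"
  have mo: "orth2 N j k P Q e \<in> measurable (PiM {..N} (\<lambda>_. N01)) (BB N)"
    using orth2_measurable[OF jk(1,2)] sets_gam[of N] unfolding gam_def
    by (simp cong: measurable_cong_sets)
  have PiEA: "PiE {..N} A \<in> sets (BB N)"
    using A by (auto intro!: sets_PiM_I_finite)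
  have Aj: "A j \<in> sets borel" "A k \<in> sets borel" using A jk by auto
  have mg: "(\<lambda>y. (y j, y k)) \<in> measurable (PiM K (\<lambda>_. N01)) (borel \<Otimes>\<^sub>M borel)"
    unfolding K_def by measurable
  have rotA: "rot -` (A j \<times> A k) \<in> sets (borel \<Otimes>\<^sub>M borel)"
    using measurable_sets[OF mrot pair_measureI[OF Aj]] by (simp add: space_pair_measure)
  have SK_eq: "SK = (\<lambda>y. (y j, y k)) -` (rot -` (A j \<times> A k)) \<inter> space (PiM K (\<lambda>_. N01))"
    unfolding SK_def by auto
  have SKm: "SK \<in> sets (PiM K (\<lambda>_. N01))"
    unfolding SK_eq using measurable_sets[OF mg rotA] .
  have RAm: "PiE R A \<in> sets (PiM R (\<lambda>_. N01))"
    using A KR by (auto intro!: sets_PiM_I_finite)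
  have "emeasure (distr (PiM {..N} (\<lambda>_. N01)) (BB N) (orth2 N j k P Q e)) (PiE {..N} A)
      = emeasure (PiM {..N} (\<lambda>_. N01)) (orth2 N j k P Q e -` PiE {..N} A \<inter> space (PiM {..N} (\<lambda>_. N01)))"
    by (rule emeasure_distr[OF mo PiEA])
  also have "\<dots> = emeasure (distr (PiM K (\<lambda>_. N01) \<Otimes>\<^sub>M PiM R (\<lambda>_. N01)) (PiM (K \<union> R) (\<lambda>_. N01)) (merge K R))
         (orth2 N j k P Q e -` PiE {..N} A \<inter> space (PiM {..N} (\<lambda>_. N01)))"
    by (subst N01p_distr_merge) (use KR in auto)
  also have "\<dots> = emeasure (PiM K (\<lambda>_. N01) \<Otimes>\<^sub>M PiM R (\<lambda>_. N01))
       (merge K R -` (orth2 N j k P Q e -` PiE {..N} A \<inter> space (PiM {..N} (\<lambda>_. N01))) \<inter> space (PiM K (\<lambda>_. N01) \<Otimes>\<^sub>M PiM R (\<lambda>_. N01)))"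
    apply (subst emeasure_distr)
      apply (rule measurable_merge)
    using measurable_sets[OF mo PiEA] KR apply simp
    apply simp
    done
  also have "merge K R -` (orth2 N j k P Q e -` PiE {..N} A \<inter> space (PiM {..N} (\<lambda>_. N01))) \<inter> space (PiM K (\<lambda>_. N01) \<Otimes>\<^sub>M PiM R (\<lambda>_. N01))
      = SK \<times> PiE R A"
  proof (intro set_eqI iffI)
    fix x assume x: "x \<in> merge K R -` (orth2 N j k P Q e -` PiE {..N} A \<inter> space (PiM {..N} (\<lambda>_. N01))) \<inter> space (PiM K (\<lambda>_. N01) \<Otimes>\<^sub>M PiM R (\<lambda>_. N01))"
    obtain y z where xyz: "x = (y, z)" by force
    have y: "y \<in> PiE K (\<lambda>_. UNIV)" and z: "z \<in> PiE R (\<lambda>_. UNIV)"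
      using x by (auto simp: xyz space_pair_measure space_PiM)
    have o: "orth2 N j k P Q e (merge K R (y, z)) i \<in> A i" if "i \<le> N" for i
      using x that by (auto simp: xyz PiE_iff)
    have mj: "merge K R (y,z) j = y j" "merge K R (y,z) k = y k" by (auto simp: merge_def K_def)
    have "rot (y j, y k) \<in> A j \<times> A k"
      using o[OF jk(1)] o[OF jk(2)] jk(3) by (simp add: orth2_def rot_def mj jk)
    then have "y \<in> SK" using y by (simp add: SK_def space_PiM)
    moreover have "z \<in> PiE R A"
    proof -
      have "z i \<in> A i" if "i \<in> R" for i
      proof -
        have "i \<le> N" "i \<noteq> j" "i \<noteq> k" "i \<notin> K" using that by (auto simp: R_def K_def)
        then show ?thesis using o[of i] that by (simp add: orth2_def merge_def)
      qed
      then show ?thesis using z by (auto simp: PiE_iff)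
    qed
    ultimately show "x \<in> SK \<times> PiE R A" by (simp add: xyz)
  next
    fix x assume x: "x \<in> SK \<times> PiE R A"
    obtain y z where xyz: "x = (y, z)" by force
    have y: "y \<in> PiE K (\<lambda>_. UNIV)" and r: "rot (y j, y k) \<in> A j \<times> A k" and z: "z \<in> PiE R A"
      using x by (auto simp: xyz SK_def space_PiM)
    have zs: "z \<in> PiE R (\<lambda>_. UNIV)" using z by (auto simp: PiE_iff)
    have mj: "merge K R (y,z) j = y j" "merge K R (y,z) k = y k" by (auto simp: merge_def K_def)
    have "orth2 N j k P Q e (merge K R (y, z)) \<in> PiE {..N} A"
    proof -
      have "orth2 N j k P Q e (merge K R (y, z)) i \<in> A i" if "i \<le> N" for i
      proof (cases "i \<in> K")
        case True
        then have "i = j \<or> i = k" by (simp add: K_def)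
        then show ?thesis using r jk(3) that by (auto simp: orth2_def rot_def mj)
      next
        case False
        then have "i \<in> R" "i \<noteq> j" "i \<noteq> k" using that by (auto simp: R_def K_def)
        then show ?thesis using z False that by (auto simp: orth2_def merge_def PiE_iff)
      qed
      then show ?thesis by (auto simp: orth2_def PiE_iff)
    qed
    moreover have "merge K R (y, z) \<in> space (PiM {..N} (\<lambda>_. N01))"
      using KR(2) by (auto simp: space_PiM PiE_iff merge_def extensional_def)
    moreover have "x \<in> space (PiM K (\<lambda>_. N01) \<Otimes>\<^sub>M PiM R (\<lambda>_. N01))"
      using y zs by (simp add: xyz space_pair_measure space_PiM)
    ultimately show "x \<in> merge K R -` (orth2 N j k P Q e -` PiE {..N} A \<inter> space (PiM {..N} (\<lambda>_. N01))) \<inter> space (PiM K (\<lambda>_. N01) \<Otimes>\<^sub>M PiM R (\<lambda>_. N01))"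
      by (simp add: xyz)
  qed
  also have "emeasure (PiM K (\<lambda>_. N01) \<Otimes>\<^sub>M PiM R (\<lambda>_. N01)) (SK \<times> PiE R A)
      = emeasure (PiM K (\<lambda>_. N01)) SK * emeasure (PiM R (\<lambda>_. N01)) (PiE R A)"
    by (rule sigma_finite_measure.emeasure_pair_measure_Times[OF sf_PiM_N01[OF KR(4)] SKm RAm])
  also have "emeasure (PiM K (\<lambda>_. N01)) SK = emeasure N01 (A j) * emeasure N01 (A k)"
  proof -
    have "emeasure (PiM K (\<lambda>_. N01)) SK = emeasure (distr (PiM K (\<lambda>_. N01)) (borel \<Otimes>\<^sub>M borel) (\<lambda>y. (y j, y k))) (rot -` (A j \<times> A k))"
      unfolding SK_eq by (rule emeasure_distr[OF mg rotA, symmetric])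
    also have "\<dots> = emeasure (N01 \<Otimes>\<^sub>M N01) (rot -` (A j \<times> A k))"
      unfolding K_def using distr_pair_PiM2[OF jk(3)] by simp
    also have "\<dots> = emeasure (distr (N01 \<Otimes>\<^sub>M N01) (borel \<Otimes>\<^sub>M borel) rot) (A j \<times> A k)"
    proof -
      have mr: "rot \<in> measurable (N01 \<Otimes>\<^sub>M N01) (borel \<Otimes>\<^sub>M borel)"
        using mrot measurable_cong_sets[OF sets_pair_measure_cong[OF sets_N01 sets_N01] refl] by blast
      show ?thesis
        by (subst emeasure_distr[OF mr]) (use Aj in \<open>auto simp: space_pair_measure\<close>)
    qed
    also have "\<dots> = emeasure (N01 \<Otimes>\<^sub>M N01) (A j \<times> A k)"
      using gauss2[OF PQ e] unfolding rot_def by simp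
    also have "\<dots> = emeasure N01 (A j) * emeasure N01 (A k)"
      by (rule sigma_finite_measure.emeasure_pair_measure_Times[OF sf_N01]) (use Aj in auto)
    finally show ?thesis .
  qed
  also have "emeasure (PiM R (\<lambda>_. N01)) (PiE R A) = (\<Prod>i\<in>R. emeasure N01 (A i))"
    using A KR by (subst N01p_emeasure_PiM) auto
  also have "emeasure N01 (A j) * emeasure N01 (A k) * (\<Prod>i\<in>R. emeasure N01 (A i)) = (\<Prod>i\<in>{..N}. emeasure N01 (A i))"
  proof -
    have "(\<Prod>i\<in>{..N}. emeasure N01 (A i)) = (\<Prod>i\<in>K. emeasure N01 (A i)) * (\<Prod>i\<in>R. emeasure N01 (A i))"
      unfolding KR(2)[symmetric] by (rule prod.union_disjoint) (use KR in auto)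
    then show ?thesis using jk(3) by (simp add: K_def)
  qed
  finally show "emeasure (distr (PiM {..N} (\<lambda>_. N01)) (BB N) (orth2 N j k P Q e)) (PiE {..N} A) = (\<Prod>i\<in>{..N}. emeasure N01 (A i))" .
qed


lemma orth2_ext: "orth2 N j k P Q e x \<in> extensional {..N}"
  by (simp add: orth2_def)

lemma orth2_cong: "(\<And>i. i \<le> N \<Longrightarrow> x i = x' i) \<Longrightarrow> j \<le> N \<Longrightarrow> k \<le> N \<Longrightarrow> orth2 N j k P Q e x = orth2 N j k P Q e x'"
  by (auto simp: orth2_def)

lemma orth2_add: "j \<le> N \<Longrightarrow> k \<le> N \<Longrightarrow> i \<le> N \<Longrightarrow> orth2 N j k P Q e (\<lambda>i. x i + z i) i = orth2 N j k P Q e x i + orth2 N j k P Q e z i"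
  by (auto simp: orth2_def algebra_simps)

lemma orth2_scale: "j \<le> N \<Longrightarrow> k \<le> N \<Longrightarrow> i \<le> N \<Longrightarrow> orth2 N j k P Q e (\<lambda>i. c * x i) i = c * orth2 N j k P Q e x i"
  by (auto simp: orth2_def algebra_simps)

lemma orth2_other: "i \<le> N \<Longrightarrow> i \<noteq> j \<Longrightarrow> i \<noteq> k \<Longrightarrow> orth2 N j k P Q e x i = x i"
  by (simp add: orth2_def)

lemma orth2_j: "j \<le> N \<Longrightarrow> orth2 N j k P Q e x j = P * x j - Q * x k"
  by (simp add: orth2_def)

lemma orth2_k: "k \<le> N \<Longrightarrow> j \<noteq> k \<Longrightarrow> orth2 N j k P Q e x k = e * (Q * x j + P * x k)"
  by (simp add: orth2_def)

lemma orth2_iso: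
  assumes "j \<le> N" "k \<le> N" "j \<noteq> k" "P\<^sup>2 + Q\<^sup>2 = 1" "e\<^sup>2 = 1"
  shows "(\<Sum>i\<le>N. (orth2 N j k P Q e x i)\<^sup>2) = (\<Sum>i\<le>N. (x i)\<^sup>2)"
proof -
  have split: "(\<Sum>i\<le>N. f i) = f j + f k + (\<Sum>i\<in>{..N} - {j} - {k}. f i)" for f :: "nat \<Rightarrow> real"
  proof -
    have "(\<Sum>i\<le>N. f i) = f j + (\<Sum>i\<in>{..N} - {j}. f i)"
      using assms by (subst sum.remove[of _ j]) auto
    also have "(\<Sum>i\<in>{..N} - {j}. f i) = f k + (\<Sum>i\<in>{..N} - {j} - {k}. f i)"
      using assms by (subst sum.remove[of _ k]) auto
    finally show ?thesis by simp
  qed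
  have rest: "(\<Sum>i\<in>{..N} - {j} - {k}. (orth2 N j k P Q e x i)\<^sup>2) = (\<Sum>i\<in>{..N} - {j} - {k}. (x i)\<^sup>2)"
    by (rule sum.cong) (auto simp: orth2_other)
  have "(orth2 N j k P Q e x j)\<^sup>2 + (orth2 N j k P Q e x k)\<^sup>2 = (P\<^sup>2 + Q\<^sup>2) * ((x j)\<^sup>2 + (x k)\<^sup>2)"
  proof -
    have "(orth2 N j k P Q e x j)\<^sup>2 + (orth2 N j k P Q e x k)\<^sup>2 = (P * x j - Q * x k)\<^sup>2 + e\<^sup>2 * (Q * x j + P * x k)\<^sup>2"
      using assms by (simp add: orth2_j orth2_k power_mult_distrib)
    also have "\<dots> = (P\<^sup>2 + Q\<^sup>2) * ((x j)\<^sup>2 + (x k)\<^sup>2)"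
      using assms(5) by (simp add: power2_eq_square algebra_simps)
    finally show ?thesis .
  qed
  then show ?thesis using assms(4) by (simp add: split[of "\<lambda>i. (orth2 N j k P Q e x i)\<^sup>2"] split[of "\<lambda>i. (x i)\<^sup>2"] rest)
qed

lemma orth2_inv:
  assumes "j \<le> N" "k \<le> N" "j \<noteq> k" "P\<^sup>2 + Q\<^sup>2 = 1" "e\<^sup>2 = 1"
  shows "orth2 N j k P (- Q * e) e (orth2 N j k P Q e x) = restrict x {..N}"
proof
  fix i
  show "orth2 N j k P (- Q * e) e (orth2 N j k P Q e x) i = restrict x {..N} i"
  proof (cases "i \<le> N")
    case True
    have e2: "e * e = 1" using assms(5) by (simp add: power2_eq_square)
    have PQ: "P * P + Q * Q = 1" using assms(4) by (simp add: power2_eq_square)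
    show ?thesis
    proof (cases "i = j")
      case True
      have "P * (P * x j - Q * x k) + Q * e * (e * (Q * x j + P * x k)) = (P * P + Q * Q * (e * e)) * x j + P * Q * (e * e - 1) * x k"
        by (simp add: algebra_simps)
      then show ?thesis using True assms by (simp add: orth2_def e2 PQ)
    next
      case False
      show ?thesis
      proof (cases "i = k")
        case True
        have "e * (- (Q * e * (P * x j - Q * x k)) + P * (e * (Q * x j + P * x k))) = (e * e) * (P * P + Q * Q) * x k"
          by (simp add: algebra_simps)
        then show ?thesis using True False assms by (simp add: orth2_def e2 PQ)
      qed (use False True in \<open>simp add: orth2_def\<close>)
    qed
  qed (simp add: orth2_def)
qed

definition rr :: "(nat \<Rightarrow> real) \<Rightarrow> nat \<Rightarrow> real" where "rr y k = sqrt (\<Sum>i\<le>k. (y i)\<^sup>2)"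
definition gsn :: "(nat \<Rightarrow> real) \<Rightarrow> nat \<Rightarrow> real" where "gsn y k = (if rr y (Suc k) = 0 then 0 else y (Suc k) / rr y (Suc k))"
definition gcs :: "(nat \<Rightarrow> real) \<Rightarrow> nat \<Rightarrow> real" where "gcs y k = (if rr y (Suc k) = 0 then 1 else rr y k / rr y (Suc k))"
definition sg :: "real \<Rightarrow> real" where "sg v = (if v < 0 then -1 else 1)"

lemma sg_sq: "(sg v)\<^sup>2 = 1" by (simp add: sg_def)
lemma sg_in: "sg v \<in> {-1,1}" by (simp add: sg_def)

lemma rr_nonneg: "rr y k \<ge> 0" by (simp add: rr_def sum_nonneg)

lemma rr_sq: "(rr y k)\<^sup>2 = (\<Sum>i\<le>k. (y i)\<^sup>2)"
  by (simp add: rr_def sum_nonneg)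

lemma rr_Suc_sq: "(rr y (Suc k))\<^sup>2 = (rr y k)\<^sup>2 + (y (Suc k))\<^sup>2"
  by (simp add: rr_sq)

lemma rr_zero: "rr y k = 0 \<Longrightarrow> i \<le> k \<Longrightarrow> y i = 0"
proof -
  assume "rr y k = 0" "i \<le> k"
  then have "(\<Sum>i\<le>k. (y i)\<^sup>2) = 0" by (metis rr_sq zero_power2)
  then have "\<forall>i\<in>{..k}. (y i)\<^sup>2 = 0" by (subst (asm) sum_nonneg_eq_0_iff) auto
  then show "y i = 0" using \<open>i \<le> k\<close> by auto
qed

lemma rr_mono: "rr y k \<le> rr y (Suc k)"
  unfolding rr_def by (rule real_sqrt_le_mono) (simp add: sum_nonneg)

lemma gsn_gcs: "(gsn y k)\<^sup>2 + (gcs y k)\<^sup>2 = 1"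
proof (cases "rr y (Suc k) = 0")
  case False
  have "(y (Suc k))\<^sup>2 + (rr y k)\<^sup>2 = (rr y (Suc k))\<^sup>2" by (simp add: rr_Suc_sq)
  then show ?thesis using False by (simp add: gsn_def gcs_def power_divide add_divide_distrib[symmetric])
qed (simp add: gsn_def gcs_def)

fun acc :: "nat \<Rightarrow> (nat \<Rightarrow> real) \<Rightarrow> nat \<Rightarrow> (nat \<Rightarrow> real) \<Rightarrow> (nat \<Rightarrow> real)" where
  "acc N y 0 x = orth2 N N 0 1 0 (sg (y 0)) x"
| "acc N y (Suc k) x = orth2 N k (Suc k) (gsn y k) (gcs y k) 1 (acc N y k x)"

fun invacc :: "nat \<Rightarrow> (nat \<Rightarrow> real) \<Rightarrow> nat \<Rightarrow> (nat \<Rightarrow> real) \<Rightarrow> (nat \<Rightarrow> real)" where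
  "invacc N y 0 x = orth2 N N 0 1 0 (sg (y 0)) x"
| "invacc N y (Suc k) x = invacc N y k (orth2 N k (Suc k) (gsn y k) (- gcs y k) 1 x)"

lemma acc_ext: "acc N y k x \<in> extensional {..N}"
  by (cases k) (simp_all add: orth2_ext)

lemma invacc_ext: "invacc N y k x \<in> extensional {..N}"
  by (induction k arbitrary: x) (simp_all add: orth2_ext)

lemma acc_cong: "k \<le> N \<Longrightarrow> (\<And>i. i \<le> N \<Longrightarrow> x i = x' i) \<Longrightarrow> acc N y k x = acc N y k x'"
proof (induction k)
  case 0 then show ?case by (simp, intro orth2_cong) auto
next
  case (Suc k) then show ?case by simp
qed

lemma invacc_cong: "k \<le> N \<Longrightarrow> (\<And>i. i \<le> N \<Longrightarrow> x i = x' i) \<Longrightarrow> invacc N y k x = invacc N y k x'"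
proof (induction k arbitrary: x x')
  case 0 then show ?case by (simp, intro orth2_cong) auto
next
  case (Suc k)
  have "orth2 N k (Suc k) (gsn y k) (- gcs y k) 1 x = orth2 N k (Suc k) (gsn y k) (- gcs y k) 1 x'"
    using Suc.prems by (intro orth2_cong) auto
  then show ?case by simp
qed

lemma acc_dep: "(\<And>i. i \<le> k \<Longrightarrow> y i = y' i) \<Longrightarrow> acc N y k x = acc N y' k x"
proof (induction k)
  case 0 then show ?case by simp
next
  case (Suc k)
  have r: "rr y m = rr y' m" if "m \<le> Suc k" for m
    unfolding rr_def using Suc.prems that by (intro arg_cong[where f=sqrt] sum.cong) auto
  have "gsn y k = gsn y' k" "gcs y k = gcs y' k"
    using r[of k] r[of "Suc k"] Suc.prems[of "Suc k"] by (auto simp: gsn_def gcs_def)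
  then show ?case using Suc by simp
qed

lemma invacc_dep: "(\<And>i. i \<le> k \<Longrightarrow> y i = y' i) \<Longrightarrow> invacc N y k x = invacc N y' k x"
proof (induction k arbitrary: x)
  case 0 then show ?case by simp
next
  case (Suc k)
  have r: "rr y m = rr y' m" if "m \<le> Suc k" for m
    unfolding rr_def using Suc.prems that by (intro arg_cong[where f=sqrt] sum.cong) auto
  have "gsn y k = gsn y' k" "gcs y k = gcs y' k"
    using r[of k] r[of "Suc k"] Suc.prems[of "Suc k"] by (auto simp: gsn_def gcs_def)
  then show ?case using Suc by simp
qed

lemma acc_untouched: "1 \<le> N \<Longrightarrow> k < i \<Longrightarrow> i \<le> N \<Longrightarrow> acc N y k x i = x i"
proof (induction k)
  case 0 then show ?case by (cases "i = N") (auto simp: orth2_def)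
next
  case (Suc k) then show ?case by (simp add: orth2_other)
qed

lemma invacc_untouched: "1 \<le> N \<Longrightarrow> k < i \<Longrightarrow> i \<le> N \<Longrightarrow> invacc N y k x i = x i"
proof (induction k arbitrary: x)
  case 0 then show ?case by (cases "i = N") (auto simp: orth2_def)
next
  case (Suc k) then show ?case by (simp add: orth2_other)
qed

lemma acc_add: "k \<le> N \<Longrightarrow> i \<le> N \<Longrightarrow> acc N y k (\<lambda>i. x i + z i) i = acc N y k x i + acc N y k z i"
proof (induction k arbitrary: i)
  case 0 then show ?case by (simp add: orth2_add)
next
  case (Suc k)
  have "acc N y (Suc k) (\<lambda>i. x i + z i) = orth2 N k (Suc k) (gsn y k) (gcs y k) 1 (\<lambda>i. acc N y k x i + acc N y k z i)"
    using Suc by (simp, intro orth2_cong) auto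
  then show ?case using Suc.prems by (simp add: orth2_add)
qed

lemma acc_scale: "k \<le> N \<Longrightarrow> i \<le> N \<Longrightarrow> acc N y k (\<lambda>i. c * x i) i = c * acc N y k x i"
proof (induction k arbitrary: i)
  case 0 then show ?case by (simp add: orth2_scale)
next
  case (Suc k)
  have "acc N y (Suc k) (\<lambda>i. c * x i) = orth2 N k (Suc k) (gsn y k) (gcs y k) 1 (\<lambda>i. c * acc N y k x i)"
    using Suc by (simp, intro orth2_cong) auto
  then show ?case using Suc.prems by (simp add: orth2_scale)
qed

lemma invacc_add: "k \<le> N \<Longrightarrow> i \<le> N \<Longrightarrow> invacc N y k (\<lambda>i. x i + z i) i = invacc N y k x i + invacc N y k z i"
proof (induction k arbitrary: i x z)
  case 0 then show ?case by (simp add: orth2_add)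
next
  case (Suc k)
  let ?o = "orth2 N k (Suc k) (gsn y k) (- gcs y k) 1"
  have "invacc N y (Suc k) (\<lambda>i. x i + z i) = invacc N y k (\<lambda>i. ?o x i + ?o z i)"
    using Suc.prems by (simp, intro invacc_cong) (auto simp: orth2_add)
  then show ?case using Suc by simp
qed

lemma invacc_scale: "k \<le> N \<Longrightarrow> i \<le> N \<Longrightarrow> invacc N y k (\<lambda>i. c * x i) i = c * invacc N y k x i"
proof (induction k arbitrary: i x)
  case 0 then show ?case by (simp add: orth2_scale)
next
  case (Suc k)
  let ?o = "orth2 N k (Suc k) (gsn y k) (- gcs y k) 1"
  have "invacc N y (Suc k) (\<lambda>i. c * x i) = invacc N y k (\<lambda>i. c * ?o x i)"
    using Suc.prems by (simp, intro invacc_cong) (auto simp: orth2_scale)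
  then show ?case using Suc by simp
qed

lemma acc_iso: "1 \<le> N \<Longrightarrow> k \<le> N \<Longrightarrow> (\<Sum>i\<le>N. (acc N y k x i)\<^sup>2) = (\<Sum>i\<le>N. (x i)\<^sup>2)"
proof (induction k)
  case 0 then show ?case by (simp add: orth2_iso sg_sq)
next
  case (Suc k) then show ?case by (simp add: orth2_iso gsn_gcs)
qed

lemma invacc_iso: "1 \<le> N \<Longrightarrow> k \<le> N \<Longrightarrow> (\<Sum>i\<le>N. (invacc N y k x i)\<^sup>2) = (\<Sum>i\<le>N. (x i)\<^sup>2)"
proof (induction k arbitrary: x)
  case 0 then show ?case by (simp add: orth2_iso sg_sq)
next
  case (Suc k)
  have "(gsn y k)\<^sup>2 + (- gcs y k)\<^sup>2 = 1" using gsn_gcs by simp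
  then show ?case using Suc by (simp add: orth2_iso)
qed

lemma invacc_acc: "1 \<le> N \<Longrightarrow> k \<le> N \<Longrightarrow> invacc N y k (acc N y k x) = restrict x {..N}"
proof (induction k)
  case 0
  have "invacc N y 0 (acc N y 0 x) = orth2 N N 0 1 (- 0 * sg (y 0)) (sg (y 0)) (orth2 N N 0 1 0 (sg (y 0)) x)"
    by simp
  also have "\<dots> = restrict x {..N}" using 0 by (intro orth2_inv) (auto simp: sg_sq)
  finally show ?case .
next
  case (Suc k)
  have "orth2 N k (Suc k) (gsn y k) (- gcs y k) 1 (acc N y (Suc k) x)
      = orth2 N k (Suc k) (gsn y k) (- gcs y k * 1) 1 (orth2 N k (Suc k) (gsn y k) (gcs y k) 1 (acc N y k x))"
    by simp
  also have "\<dots> = restrict (acc N y k x) {..N}"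
    using Suc.prems by (intro orth2_inv) (auto simp: gsn_gcs)
  also have "\<dots> = acc N y k x"
    using acc_ext[of N y k x] by (simp add: extensional_restrict)
  finally show ?case using Suc by simp
qed

lemma acc_coord: "1 \<le> N \<Longrightarrow> k \<le> N \<Longrightarrow> rr y k \<noteq> 0 \<Longrightarrow> acc N y k x k = (\<Sum>i\<le>k. x i * y i) / rr y k"
proof (induction k)
  case 0
  have "rr y 0 = \<bar>y 0\<bar>" by (simp add: rr_def)
  with 0 show ?case by (auto simp: orth2_def sg_def abs_if)
next
  case (Suc k)
  have xu: "acc N y k x (Suc k) = x (Suc k)" using Suc.prems by (intro acc_untouched) auto
  have val: "acc N y (Suc k) x (Suc k) = gcs y k * acc N y k x k + gsn y k * x (Suc k)"
    using Suc.prems by (simp add: orth2_k xu)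
  show ?case
  proof (cases "rr y k = 0")
    case True
    then have z: "y i = 0" if "i \<le> k" for i using rr_zero that by blast
    have "(\<Sum>i\<le>Suc k. x i * y i) = x (Suc k) * y (Suc k)" using z by simp
    then show ?thesis using val True Suc.prems by (simp add: gcs_def gsn_def)
  next
    case False
    have "acc N y k x k = (\<Sum>i\<le>k. x i * y i) / rr y k" using Suc False by simp
    then show ?thesis using val False Suc.prems
      by (simp add: gcs_def gsn_def add_divide_distrib)
  qed
qed

lemma acc_self: "1 \<le> N \<Longrightarrow> k \<le> N \<Longrightarrow> (\<forall>i<k. acc N y k y i = 0) \<and> acc N y k y k = rr y k"
proof (induction k)
  case 0
  have "rr y 0 = \<bar>y 0\<bar>" by (simp add: rr_def)
  with 0 show ?case by (auto simp: orth2_def sg_def abs_if)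
next
  case (Suc k)
  have xu: "acc N y k y (Suc k) = y (Suc k)" using Suc.prems by (intro acc_untouched) auto
  have IH: "\<forall>i<k. acc N y k y i = 0" "acc N y k y k = rr y k" using Suc by auto
  have v1: "acc N y (Suc k) y (Suc k) = gcs y k * rr y k + gsn y k * y (Suc k)"
    using Suc.prems by (simp add: orth2_k xu IH)
  have v0: "acc N y (Suc k) y k = gsn y k * rr y k - gcs y k * y (Suc k)"
    using Suc.prems by (simp add: orth2_j xu IH)
  have lo: "acc N y (Suc k) y i = 0" if "i < k" for i
    using Suc.prems that IH by (simp add: orth2_other)
  show ?case
  proof (cases "rr y (Suc k) = 0")
    case True
    then have "y (Suc k) = 0" "rr y k = 0" using rr_zero[OF True, of "Suc k"] rr_mono[of y k] rr_nonneg[of y k] by auto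
    then show ?thesis using v0 v1 lo True by (auto simp: gcs_def gsn_def less_Suc_eq)
  next
    case False
    have "rr y k * rr y k + y (Suc k) * y (Suc k) = rr y (Suc k) * rr y (Suc k)"
      using rr_Suc_sq[of y k] by (simp add: power2_eq_square)
    then have "(rr y k * rr y k + y (Suc k) * y (Suc k)) / rr y (Suc k) = rr y (Suc k)"
      using False by simp
    then have "acc N y (Suc k) y (Suc k) = rr y (Suc k)"
      using v1 False by (simp add: gcs_def gsn_def add_divide_distrib)
    moreover have "acc N y (Suc k) y k = 0"
      using v0 False by (simp add: gcs_def gsn_def algebra_simps)
    ultimately show ?thesis using lo by (auto simp: less_Suc_eq)
  qed
qed


definition ones :: "nat \<Rightarrow> real" where "ones = (\<lambda>_. 1)"
definition uN :: "nat \<Rightarrow> nat \<Rightarrow> real" where "uN N = (\<lambda>i. if i < N then 1 else 0)"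
definition Orot :: "nat \<Rightarrow> (nat \<Rightarrow> real) \<Rightarrow> (nat \<Rightarrow> real) \<Rightarrow> (nat \<Rightarrow> real)" where
  "Orot N a x = invacc N (uN N) (N - 1) (acc N (acc N ones N a) (N - 1) (acc N ones N x))"

lemma rr_ones: "rr ones k = sqrt (Suc k)"
  by (simp add: rr_def ones_def)

lemma rr_ones': "rr (\<lambda>_. 1) k = sqrt (Suc k)"
  by (simp add: rr_def)

lemma rr_uN: "k < N \<Longrightarrow> rr (uN N) k = sqrt (Suc k)"
  by (simp add: rr_def uN_def)

lemma Orot_last:
  assumes N: "1 \<le> N"
  shows "Orot N a x N = (\<Sum>i\<le>N. x i) / sqrt (Suc N)"
proof -
  have "Orot N a x N = acc N (acc N ones N a) (N - 1) (acc N ones N x) N"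
    unfolding Orot_def using N by (intro invacc_untouched) auto
  also have "\<dots> = acc N ones N x N"
    using N by (intro acc_untouched) auto
  also have "\<dots> = (\<Sum>i\<le>N. x i * ones i) / rr ones N"
    using N by (intro acc_coord) (auto simp: rr_ones)
  finally show ?thesis by (simp add: ones_def rr_ones')
qed

lemma Orot_add:
  assumes N: "1 \<le> N" and i: "i \<le> N"
  shows "Orot N a (\<lambda>i. x i + z i) i = Orot N a x i + Orot N a z i"
proof -
  let ?b = "acc N ones N a"
  have "acc N ?b (N - 1) (acc N ones N (\<lambda>i. x i + z i)) = acc N ?b (N - 1) (\<lambda>i. acc N ones N x i + acc N ones N z i)"
    by (rule acc_cong) (auto simp: acc_add)
  moreover have "invacc N (uN N) (N - 1) (acc N ?b (N - 1) (\<lambda>i. acc N ones N x i + acc N ones N z i))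
     = invacc N (uN N) (N - 1) (\<lambda>i. acc N ?b (N - 1) (acc N ones N x) i + acc N ?b (N - 1) (acc N ones N z) i)"
    by (rule invacc_cong) (auto simp: acc_add)
  ultimately show ?thesis unfolding Orot_def using i by (simp add: invacc_add)
qed

lemma Orot_iso:
  assumes N: "1 \<le> N"
  shows "(\<Sum>i\<le>N. (Orot N a x i)\<^sup>2) = (\<Sum>i\<le>N. (x i)\<^sup>2)"
  unfolding Orot_def using N by (simp add: invacc_iso acc_iso)

lemma Orot_self:
  assumes N: "1 \<le> N" and a0: "(\<Sum>i\<le>N. a i) = 0" and i: "i < N"
  shows "Orot N a a i = sqrt (\<Sum>i\<le>N. (a i)\<^sup>2) / sqrt N"
proof -
  define b where "b = acc N ones N a"
  define w where "w = acc N b (N - 1) b"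
  define v where "v = acc N (uN N) (N - 1) (uN N)"
  define L where "L = sqrt (\<Sum>i\<le>N. (a i)\<^sup>2)"
  have bN: "b N = 0"
  proof -
    have "b N = (\<Sum>i\<le>N. a i * ones i) / rr ones N"
      unfolding b_def using N by (intro acc_coord) (auto simp: rr_ones)
    then show ?thesis using a0 by (simp add: ones_def)
  qed
  have Nm: "N - 1 \<le> N" "Suc (N - 1) = N" using N by auto
  have w1: "\<forall>i<N - 1. w i = 0" "w (N - 1) = rr b (N - 1)"
    using acc_self[OF N Nm(1), of b] unfolding w_def by auto
  have wN: "w N = 0" unfolding w_def using N bN by (subst acc_untouched) auto
  have rb: "rr b (N - 1) = L"
  proof -
    have "(\<Sum>i\<le>N. (b i)\<^sup>2) = (\<Sum>i\<le>N - 1. (b i)\<^sup>2)"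
    proof -
      have "{..N} = insert N {..N - 1}" using N by auto
      then show ?thesis using bN N by simp
    qed
    moreover have "(\<Sum>i\<le>N. (b i)\<^sup>2) = (\<Sum>i\<le>N. (a i)\<^sup>2)"
      unfolding b_def using N by (rule acc_iso) simp
    ultimately show ?thesis by (simp add: rr_def L_def)
  qed
  have v1: "\<forall>i<N - 1. v i = 0" "v (N - 1) = sqrt N"
    using acc_self[OF N Nm(1), of "uN N"] rr_uN[of "N - 1" N] N unfolding v_def by auto
  have vN: "v N = 0" unfolding v_def using N by (subst acc_untouched) (auto simp: uN_def)
  have wv: "w j = (L / sqrt N) * v j" if "j \<le> N" for j
  proof -
    have "j < N - 1 \<or> j = N - 1 \<or> j = N" using that by linarith
    then show ?thesis
    proof (elim disjE)
      assume "j < N - 1" then show ?thesis using w1 v1 by simp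
    next
      assume "j = N - 1" then show ?thesis using w1 v1 rb N by simp
    next
      assume "j = N" then show ?thesis using wN vN by simp
    qed
  qed
  have "Orot N a a = invacc N (uN N) (N - 1) w"
    unfolding Orot_def w_def b_def ..
  also have "\<dots> = invacc N (uN N) (N - 1) (\<lambda>j. (L / sqrt N) * v j)"
    by (rule invacc_cong) (use wv in auto)
  finally have "Orot N a a i = (L / sqrt N) * invacc N (uN N) (N - 1) v i"
    using i invacc_scale[where k="N - 1" and N=N and i=i and c="L / sqrt N" and x=v and y="uN N"] by simp
  also have "invacc N (uN N) (N - 1) v = restrict (uN N) {..N}"
    unfolding v_def using N by (intro invacc_acc) auto
  finally show ?thesis using i by (simp add: uN_def L_def)
qed

lemma sum_sq_center:
  fixes g a :: "nat \<Rightarrow> real"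
  assumes a0: "(\<Sum>i\<le>N. a i) = 0"
  shows "(\<Sum>i\<le>N. (g i - (\<Sum>j\<le>N. g j) / real (Suc N) + a i)\<^sup>2)
       = (\<Sum>i\<le>N. (g i + a i)\<^sup>2) - (\<Sum>i\<le>N. g i + a i)\<^sup>2 / real (Suc N)"
proof -
  define S where "S = (\<Sum>j\<le>N. g j)"
  define m where "m = S / real (Suc N)"
  have Sga: "(\<Sum>i\<le>N. g i + a i) = S" using a0 by (simp add: S_def sum.distrib)
  have "(\<Sum>i\<le>N. (g i - m + a i)\<^sup>2) = (\<Sum>i\<le>N. (g i + a i)\<^sup>2 - 2 * m * (g i + a i) + m\<^sup>2)"
    by (rule sum.cong) (auto simp: power2_eq_square algebra_simps)
  also have "\<dots> = (\<Sum>i\<le>N. (g i + a i)\<^sup>2) - 2 * m * (\<Sum>i\<le>N. g i + a i) + real (Suc N) * m\<^sup>2"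
    by (simp add: sum.distrib sum_subtractf sum_distrib_left[symmetric])
  also have "\<dots> = (\<Sum>i\<le>N. (g i + a i)\<^sup>2) - S\<^sup>2 / real (Suc N)"
  proof -
    have gen: "X - 2 * (S / r) * S + r * (S / r)\<^sup>2 = X - S\<^sup>2 / r" if "r > 0" for X r :: real
      using that by (simp add: field_simps power2_eq_square)
    show ?thesis unfolding Sga m_def by (rule gen) simp
  qed
  finally show ?thesis by (simp add: m_def S_def Sga[unfolded S_def])
qed

lemma Orot_dev:
  assumes N: "1 \<le> N" and a0: "(\<Sum>i\<le>N. a i) = 0"
  shows "(\<Sum>i<N. (Orot N a g i + sqrt (\<Sum>i\<le>N. (a i)\<^sup>2) / sqrt N)\<^sup>2)
       = (\<Sum>i\<le>N. (g i - (\<Sum>j\<le>N. g j) / real (Suc N) + a i)\<^sup>2)"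
proof -
  let ?z = "Orot N a (\<lambda>i. g i + a i)"
  have "(\<Sum>i<N. (Orot N a g i + sqrt (\<Sum>i\<le>N. (a i)\<^sup>2) / sqrt N)\<^sup>2) = (\<Sum>i<N. (?z i)\<^sup>2)"
    by (rule sum.cong) (use N a0 in \<open>auto simp: Orot_add Orot_self\<close>)
  also have "\<dots> = (\<Sum>i\<le>N. (?z i)\<^sup>2) - (?z N)\<^sup>2"
    by (simp add: lessThan_Suc_atMost[symmetric])
  also have "\<dots> = (\<Sum>i\<le>N. (g i + a i)\<^sup>2) - (\<Sum>i\<le>N. g i + a i)\<^sup>2 / real (Suc N)"
    using N by (simp add: Orot_iso Orot_last power_divide)
  also have "\<dots> = (\<Sum>i\<le>N. (g i - (\<Sum>j\<le>N. g j) / real (Suc N) + a i)\<^sup>2)"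
    using sum_sq_center[OF a0] by simp
  finally show ?thesis .
qed


lemma orth2_meas:
  assumes jk: "j \<le> N" "k \<le> N"
    and [measurable]: "Pf \<in> borel_measurable Mp" "Qf \<in> borel_measurable Mp" "ef \<in> borel_measurable Mp"
    and X: "\<And>i. i \<le> N \<Longrightarrow> (\<lambda>p. Xf p i) \<in> borel_measurable Mp"
  shows "(\<lambda>p. orth2 N j k (Pf p) (Qf p) (ef p) (Xf p)) \<in> measurable Mp (BB N)"
proof -
  have "(\<lambda>p i. orth2 N j k (Pf p) (Qf p) (ef p) (Xf p) i) \<in> measurable Mp (BB N)"
  proof (rule measurable_PiM_single')
    fix i assume i: "i \<in> {..N}"
    have [measurable]: "(\<lambda>p. Xf p j) \<in> borel_measurable Mp" "(\<lambda>p. Xf p k) \<in> borel_measurable Mp"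
       "(\<lambda>p. Xf p i) \<in> borel_measurable Mp" using X jk i by auto
    show "(\<lambda>p. orth2 N j k (Pf p) (Qf p) (ef p) (Xf p) i) \<in> borel_measurable Mp"
    proof (cases "i = j")
      case True
      then have "(\<lambda>p. orth2 N j k (Pf p) (Qf p) (ef p) (Xf p) i) = (\<lambda>p. Pf p * Xf p j - Qf p * Xf p k)"
        using i by (auto simp: orth2_def)
      then show ?thesis by simp
    next
      case False
      show ?thesis
      proof (cases "i = k")
        case True
        then have "(\<lambda>p. orth2 N j k (Pf p) (Qf p) (ef p) (Xf p) i) = (\<lambda>p. ef p * (Qf p * Xf p j + Pf p * Xf p k))"
          using i False by (auto simp: orth2_def)
        then show ?thesis by simp
      next
        case F2: False
        then have "(\<lambda>p. orth2 N j k (Pf p) (Qf p) (ef p) (Xf p) i) = (\<lambda>p. Xf p i)"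
          using i False by (auto simp: orth2_def)
        then show ?thesis by simp
      qed
    qed
  next
    show "(\<lambda>p i. orth2 N j k (Pf p) (Qf p) (ef p) (Xf p) i) \<in> space Mp \<rightarrow> (\<Pi>\<^sub>E i\<in>{..N}. space borel)"
      using orth2_ext[of N j k] by (intro Pi_I) (simp add: PiE_iff)
  qed
  then show ?thesis by simp
qed

lemma comp_BB: "f \<in> measurable Mp (BB N) \<Longrightarrow> i \<le> N \<Longrightarrow> (\<lambda>p. f p i) \<in> borel_measurable Mp"
  by (rule measurable_compose[OF _ measurable_component_singleton]) auto

lemma rr_meas:
  assumes "\<And>i. (\<lambda>p. Yf p i) \<in> borel_measurable Mp"
  shows "(\<lambda>p. rr (Yf p) k) \<in> borel_measurable Mp"
proof -
  have [measurable]: "(\<lambda>p. Yf p i) \<in> borel_measurable Mp" for i using assms by auto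
  show ?thesis unfolding rr_def by measurable
qed

lemma gsn_meas:
  assumes "\<And>i. (\<lambda>p. Yf p i) \<in> borel_measurable Mp"
  shows "(\<lambda>p. gsn (Yf p) k) \<in> borel_measurable Mp"
proof -
  have [measurable]: "(\<lambda>p. Yf p i) \<in> borel_measurable Mp" for i using assms by auto
  have [measurable]: "(\<lambda>p. rr (Yf p) i) \<in> borel_measurable Mp" for i using rr_meas[OF assms] by auto
  show ?thesis unfolding gsn_def by measurable
qed

lemma gcs_meas:
  assumes "\<And>i. (\<lambda>p. Yf p i) \<in> borel_measurable Mp"
  shows "(\<lambda>p. gcs (Yf p) k) \<in> borel_measurable Mp"
proof -
  have [measurable]: "(\<lambda>p. rr (Yf p) i) \<in> borel_measurable Mp" for i using rr_meas[OF assms] by auto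
  show ?thesis unfolding gcs_def by measurable
qed

lemma sg_meas[measurable]: "sg \<in> borel_measurable borel"
  unfolding sg_def by measurable

lemma acc_meas:
  assumes N: "1 \<le> N" and Y: "\<And>i. (\<lambda>p. Yf p i) \<in> borel_measurable Mp"
    and X: "\<And>i. i \<le> N \<Longrightarrow> (\<lambda>p. Xf p i) \<in> borel_measurable Mp"
  shows "k \<le> N \<Longrightarrow> (\<lambda>p. acc N (Yf p) k (Xf p)) \<in> measurable Mp (BB N)"
proof (induction k)
  case 0
  have [measurable]: "(\<lambda>p. Yf p 0) \<in> borel_measurable Mp" using Y by auto
  show ?case by simp (rule orth2_meas, use N X in auto)
next
  case (Suc k)
  have [measurable]: "(\<lambda>p. gsn (Yf p) k) \<in> borel_measurable Mp" "(\<lambda>p. gcs (Yf p) k) \<in> borel_measurable Mp"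
    using gsn_meas[OF Y] gcs_meas[OF Y] by auto
  have IH: "(\<lambda>p. acc N (Yf p) k (Xf p)) \<in> measurable Mp (BB N)" using Suc by auto
  show ?case by simp (rule orth2_meas, use Suc.prems comp_BB[OF IH] in auto)
qed

lemma invacc_meas:
  assumes N: "1 \<le> N" and Y: "\<And>i. (\<lambda>p. Yf p i) \<in> borel_measurable Mp"
  shows "k \<le> N \<Longrightarrow> (\<And>i. i \<le> N \<Longrightarrow> (\<lambda>p. Xf p i) \<in> borel_measurable Mp) \<Longrightarrow> (\<lambda>p. invacc N (Yf p) k (Xf p)) \<in> measurable Mp (BB N)"
proof (induction k arbitrary: Xf)
  case 0
  have [measurable]: "(\<lambda>p. Yf p 0) \<in> borel_measurable Mp" using Y by auto
  show ?case by simp (rule orth2_meas, use N 0 in auto)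
next
  case (Suc k)
  have g1: "(\<lambda>p. gcs (Yf p) k) \<in> borel_measurable Mp" by (rule gcs_meas[OF Y])
  have [measurable]: "(\<lambda>p. gsn (Yf p) k) \<in> borel_measurable Mp" "(\<lambda>p. - gcs (Yf p) k) \<in> borel_measurable Mp"
    using gsn_meas[OF Y] borel_measurable_uminus[OF g1] by auto
  have o: "(\<lambda>p. orth2 N k (Suc k) (gsn (Yf p) k) (- gcs (Yf p) k) 1 (Xf p)) \<in> measurable Mp (BB N)"
    by (rule orth2_meas) (use Suc.prems g1 in auto)
  show ?case by simp (rule Suc.IH, use Suc.prems comp_BB[OF o] in auto)
qed

lemma Orot_meas:
  assumes N: "1 \<le> N" and A: "\<And>i. (\<lambda>p. Af p i) \<in> borel_measurable Mp"
    and X: "\<And>i. i \<le> N \<Longrightarrow> (\<lambda>p. Xf p i) \<in> borel_measurable Mp"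
  shows "(\<lambda>p. Orot N (Af p) (Xf p)) \<in> measurable Mp (BB N)"
proof -
  have b: "(\<lambda>p. acc N ones N (Af p)) \<in> measurable Mp (BB N)"
    by (rule acc_meas) (use N A in \<open>auto simp: ones_def\<close>)
  have bY: "(\<lambda>p. acc N ones N (Af p) i) \<in> borel_measurable Mp" for i
  proof (cases "i \<le> N")
    case True then show ?thesis using comp_BB[OF b] by auto
  next
    case False
    then have "acc N ones N (Af p) i = undefined" for p using acc_ext[of N ones N "Af p"] by (simp add: extensional_def)
    then show ?thesis by simp
  qed
  have c: "(\<lambda>p. acc N ones N (Xf p)) \<in> measurable Mp (BB N)"
    by (rule acc_meas) (use N X in \<open>auto simp: ones_def\<close>)
  have d: "(\<lambda>p. acc N (acc N ones N (Af p)) (N - 1) (acc N ones N (Xf p))) \<in> measurable Mp (BB N)"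
    by (rule acc_meas) (use N bY comp_BB[OF c] in auto)
  show ?thesis unfolding Orot_def
    by (rule invacc_meas) (use N comp_BB[OF d] in \<open>auto simp: uN_def\<close>)
qed


lemma meas_gam: "f \<in> measurable (BB N) X \<Longrightarrow> f \<in> measurable (gam N) X"
  using measurable_cong_sets[OF sets_gam refl] by blast

lemma mp_comp:
  assumes f: "f \<in> measurable (BB N) (BB N)" "distr (gam N) (BB N) f = gam N"
    and g: "g \<in> measurable (BB N) (BB N)" "distr (gam N) (BB N) g = gam N"
  shows "distr (gam N) (BB N) (\<lambda>x. g (f x)) = gam N"
proof -
  have "distr (gam N) (BB N) (\<lambda>x. g (f x)) = distr (distr (gam N) (BB N) f) (BB N) g"
    by (subst distr_distr) (use f g in \<open>auto simp: comp_def intro: meas_gam\<close>)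
  also have "\<dots> = gam N" using f g by simp
  finally show ?thesis .
qed

lemma acc_mp:
  assumes N: "1 \<le> N"
  shows "k \<le> N \<Longrightarrow> distr (gam N) (BB N) (acc N y k) = gam N"
proof (induction k)
  case 0 then show ?case using N orth2_mp[of N N 0 1 0 "sg (y 0)", OF _ _ _ _ sg_in] by simp
next
  case (Suc k)
  have m: "(\<lambda>x. acc N y k x) \<in> measurable (BB N) (BB N)"
    using acc_meas[OF N, of "\<lambda>_. y" "BB N" "\<lambda>x. x" k] Suc.prems comp_BB[of "\<lambda>x. x"] by auto
  have o: "orth2 N k (Suc k) (gsn y k) (gcs y k) 1 \<in> measurable (BB N) (BB N)"
    using Suc.prems by (intro orth2_measurable) auto
  have "distr (gam N) (BB N) (\<lambda>x. orth2 N k (Suc k) (gsn y k) (gcs y k) 1 (acc N y k x)) = gam N"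
    by (rule mp_comp[OF m _ o]) (use Suc in \<open>auto intro!: orth2_mp simp: gsn_gcs\<close>)
  then show ?case by (simp add: comp_def)
qed

lemma acc_meas1: "1 \<le> N \<Longrightarrow> k \<le> N \<Longrightarrow> acc N y k \<in> measurable (BB N) (BB N)"
  using acc_meas[of N "\<lambda>_. y" "BB N" "\<lambda>x. x" k] comp_BB[of "\<lambda>x. x"] by auto

lemma invacc_meas1: "1 \<le> N \<Longrightarrow> k \<le> N \<Longrightarrow> invacc N y k \<in> measurable (BB N) (BB N)"
  using invacc_meas[of N "\<lambda>_. y" "BB N" k "\<lambda>x. x"] comp_BB[of "\<lambda>x. x"] by auto

lemma invacc_mp:
  assumes N: "1 \<le> N"
  shows "k \<le> N \<Longrightarrow> distr (gam N) (BB N) (invacc N y k) = gam N"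
proof (induction k)
  case 0 then show ?case using N orth2_mp[of N N 0 1 0 "sg (y 0)", OF _ _ _ _ sg_in] by simp
next
  case (Suc k)
  have m: "invacc N y k \<in> measurable (BB N) (BB N)"
    using invacc_meas1[OF N] Suc.prems by auto
  have o: "orth2 N k (Suc k) (gsn y k) (- gcs y k) 1 \<in> measurable (BB N) (BB N)"
    using Suc.prems by (intro orth2_measurable) auto
  have "(gsn y k)\<^sup>2 + (- gcs y k)\<^sup>2 = 1" using gsn_gcs by simp
  then have "distr (gam N) (BB N) (\<lambda>x. invacc N y k (orth2 N k (Suc k) (gsn y k) (- gcs y k) 1 x)) = gam N"
    by (intro mp_comp[OF o _ m]) (use Suc in \<open>auto intro!: orth2_mp\<close>)
  then show ?case by (simp add: comp_def)
qed

lemma Orot_mp: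
  assumes N: "1 \<le> N"
  shows "distr (gam N) (BB N) (Orot N a) = gam N"
proof -
  let ?b = "acc N ones N a"
  have m1: "acc N ones N \<in> measurable (BB N) (BB N)" using acc_meas1[OF N] by simp
  have m2: "acc N ?b (N - 1) \<in> measurable (BB N) (BB N)" using acc_meas1[OF N] by simp
  have m3: "invacc N (uN N) (N - 1) \<in> measurable (BB N) (BB N)" using invacc_meas1[OF N] by simp
  have d1: "distr (gam N) (BB N) (acc N ones N) = gam N" using acc_mp[OF N] by simp
  have d2: "distr (gam N) (BB N) (acc N ?b (N - 1)) = gam N" using acc_mp[OF N] by simp
  have d3: "distr (gam N) (BB N) (invacc N (uN N) (N - 1)) = gam N" using invacc_mp[OF N] by simp
  have m12: "(\<lambda>x. acc N ?b (N - 1) (acc N ones N x)) \<in> measurable (BB N) (BB N)"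
    using measurable_comp[OF m1 m2] by (simp add: comp_def)
  have d12: "distr (gam N) (BB N) (\<lambda>x. acc N ?b (N - 1) (acc N ones N x)) = gam N"
    by (rule mp_comp[OF m1 d1 m2 d2])
  have "distr (gam N) (BB N) (\<lambda>x. invacc N (uN N) (N - 1) (acc N ?b (N - 1) (acc N ones N x))) = gam N"
    by (rule mp_comp[OF m12 d12 m3 d3])
  then show ?thesis unfolding Orot_def[abs_def] .
qed


lemma distr_pair_snd':
  assumes N: "prob_space N" and M: "sigma_finite_measure M"
  shows "distr (N \<Otimes>\<^sub>M M) M snd = M"
proof (intro measure_eqI)
  fix A assume A: "A \<in> sets (distr (N \<Otimes>\<^sub>M M) M snd)"
  from A have "emeasure (distr (N \<Otimes>\<^sub>M M) M snd) A = emeasure (N \<Otimes>\<^sub>M M) (space N \<times> A)"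
    by (auto simp add: emeasure_distr space_pair_measure dest: sets.sets_into_space intro!: arg_cong2[where f=emeasure])
  also have "\<dots> = emeasure N (space N) * emeasure M A"
    using A by (intro sigma_finite_measure.emeasure_pair_measure_Times[OF M]) auto
  finally show "emeasure (distr (N \<Otimes>\<^sub>M M) M snd) A = emeasure M A"
    using prob_space.emeasure_space_1[OF N] by simp
qed simp

lemma sf_gam: "sigma_finite_measure (gam N)"
  by (rule prob_space_imp_sigma_finite[OF prob_space_gam])

definition (in prob_space) indepP :: "'b measure \<Rightarrow> ('a \<Rightarrow> 'b) \<Rightarrow> 'c measure \<Rightarrow> ('a \<Rightarrow> 'c) \<Rightarrow> bool" where
  "indepP Ma A Mb B \<longleftrightarrow> A \<in> measurable M Ma \<and> B \<in> measurable M Mb \<and>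
     distr M Ma A \<Otimes>\<^sub>M distr M Mb B = distr M (Ma \<Otimes>\<^sub>M Mb) (\<lambda>x. (A x, B x))"

lemma (in prob_space) indep_var_indepP: "indep_var Ma A Mb B \<Longrightarrow> indepP Ma A Mb B"
  unfolding indepP_def indep_var_distribution_eq by auto

lemma (in prob_space) indepP_compose:
  assumes ind: "indepP Ma A Mb B" and f: "f \<in> measurable Ma Na" and g: "g \<in> measurable Mb Nb"
  shows "indepP Na (\<lambda>x. f (A x)) Nb (\<lambda>x. g (B x))"
proof -
  have A: "A \<in> measurable M Ma" and B: "B \<in> measurable M Mb"
    and J: "distr M Ma A \<Otimes>\<^sub>M distr M Mb B = distr M (Ma \<Otimes>\<^sub>M Mb) (\<lambda>x. (A x, B x))"
    using ind unfolding indepP_def by auto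
  have fA: "(\<lambda>x. f (A x)) \<in> measurable M Na" using measurable_comp[OF A f] by (simp add: comp_def)
  have gB: "(\<lambda>x. g (B x)) \<in> measurable M Nb" using measurable_comp[OF B g] by (simp add: comp_def)
  have AB: "(\<lambda>x. (A x, B x)) \<in> measurable M (Ma \<Otimes>\<^sub>M Mb)" using A B by (simp add: measurable_pair_iff comp_def)
  have fg: "(\<lambda>(x, y). (f x, g y)) \<in> measurable (Ma \<Otimes>\<^sub>M Mb) (Na \<Otimes>\<^sub>M Nb)"
    using f g by (simp add: measurable_pair_iff split_beta' measurable_comp[OF measurable_fst f, unfolded comp_def] measurable_comp[OF measurable_snd g, unfolded comp_def])
  have sfB: "sigma_finite_measure (distr (distr M Mb B) Nb g)"
    unfolding distr_distr[OF g B] by (rule prob_space_imp_sigma_finite, rule prob_space_distr[OF measurable_comp[OF B g]])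
  have "distr M Na (\<lambda>x. f (A x)) \<Otimes>\<^sub>M distr M Nb (\<lambda>x. g (B x))
      = distr (distr M Ma A) Na f \<Otimes>\<^sub>M distr (distr M Mb B) Nb g"
    using distr_distr[OF f A] distr_distr[OF g B] by (simp add: comp_def)
  also have "\<dots> = distr (distr M Ma A \<Otimes>\<^sub>M distr M Mb B) (Na \<Otimes>\<^sub>M Nb) (\<lambda>(x, y). (f x, g y))"
    by (rule pair_measure_distr) (use f g sfB in auto)
  also have "\<dots> = distr M (Na \<Otimes>\<^sub>M Nb) (\<lambda>x. (f (A x), g (B x)))"
    unfolding J by (subst distr_distr[OF fg AB]) (simp add: comp_def)
  finally show ?thesis unfolding indepP_def using fA gB by simp
qed

lemma (in prob_space) indepP_D:
  assumes ind: "indepP Ma A Mb B" and sets: "Xa \<in> sets Ma" "Xb \<in> sets Mb"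
  shows "prob ((\<lambda>x. (A x, B x)) -` (Xa \<times> Xb) \<inter> space M) = prob (A -` Xa \<inter> space M) * prob (B -` Xb \<inter> space M)"
proof -
  have A: "A \<in> measurable M Ma" and B: "B \<in> measurable M Mb"
    and J: "distr M Ma A \<Otimes>\<^sub>M distr M Mb B = distr M (Ma \<Otimes>\<^sub>M Mb) (\<lambda>x. (A x, B x))"
    using ind unfolding indepP_def by auto
  have AB: "(\<lambda>x. (A x, B x)) \<in> measurable M (Ma \<Otimes>\<^sub>M Mb)" using A B by (simp add: measurable_pair_iff comp_def)
  interpret pA: prob_space "distr M Ma A" by (rule prob_space_distr[OF A])
  interpret pB: prob_space "distr M Mb B" by (rule prob_space_distr[OF B])
  have "prob ((\<lambda>x. (A x, B x)) -` (Xa \<times> Xb) \<inter> space M) = measure (distr M (Ma \<Otimes>\<^sub>M Mb) (\<lambda>x. (A x, B x))) (Xa \<times> Xb)"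
    by (rule measure_distr[symmetric, OF AB]) (use sets in auto)
  also have "\<dots> = measure (distr M Ma A) Xa * measure (distr M Mb B) Xb"
  proof -
    have "emeasure (distr M Ma A \<Otimes>\<^sub>M distr M Mb B) (Xa \<times> Xb) = emeasure (distr M Ma A) Xa * emeasure (distr M Mb B) Xb"
      by (rule pB.emeasure_pair_measure_Times) (use sets in auto)
    then show ?thesis unfolding J[symmetric] by (simp add: measure_def enn2real_mult)
  qed
  also have "\<dots> = prob (A -` Xa \<inter> space M) * prob (B -` Xb \<inter> space M)"
    using sets by (simp add: measure_distr[OF A] measure_distr[OF B])
  finally show ?thesis .
qed

lemma (in prob_space) indep_rot:
  assumes ind: "indepP Mh H (BB N) F"
    and dF: "distr M (BB N) F = gam N"
    and Phi: "(\<lambda>(h,x). Phi h x) \<in> measurable (Mh \<Otimes>\<^sub>M BB N) (BB N)"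
    and inv: "\<And>h. h \<in> space Mh \<Longrightarrow> distr (gam N) (BB N) (Phi h) = gam N"
  shows "indepP Mh H (BB N) (\<lambda>\<omega>. Phi (H \<omega>) (F \<omega>)) \<and> distr M (BB N) (\<lambda>\<omega>. Phi (H \<omega>) (F \<omega>)) = gam N"
proof -
  have rvH[measurable]: "H \<in> measurable M Mh" and rvF[measurable]: "F \<in> measurable M (BB N)"
    and J0: "distr M Mh H \<Otimes>\<^sub>M distr M (BB N) F = distr M (Mh \<Otimes>\<^sub>M BB N) (\<lambda>x. (H x, F x))"
    using ind unfolding indepP_def by auto
  define \<nu> where "\<nu> = distr M Mh H"
  have pnu: "prob_space \<nu>" unfolding \<nu>_def by (rule prob_space_distr) simp
  have snu: "sets \<nu> = sets Mh" "space \<nu> = space Mh" unfolding \<nu>_def by auto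
  have J: "distr M (Mh \<Otimes>\<^sub>M BB N) (\<lambda>x. (H x, F x)) = \<nu> \<Otimes>\<^sub>M gam N"
    using J0 dF by (simp add: \<nu>_def)
  define T where "T = (\<lambda>(h, x). (h, Phi h x))"
  have mT: "T \<in> measurable (Mh \<Otimes>\<^sub>M BB N) (Mh \<Otimes>\<^sub>M BB N)"
    unfolding T_def using Phi by (auto simp: measurable_pair_iff split_beta')
  have sets_ng: "sets (\<nu> \<Otimes>\<^sub>M gam N) = sets (Mh \<Otimes>\<^sub>M BB N)"
    by (rule sets_pair_measure_cong) (simp_all add: snu sets_gam)
  have mT': "T \<in> measurable (\<nu> \<Otimes>\<^sub>M gam N) (Mh \<Otimes>\<^sub>M BB N)"
    using mT measurable_cong_sets[OF sets_ng refl] by blast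
  have mPhi_h: "Phi h \<in> measurable (BB N) (BB N)" if "h \<in> space Mh" for h
    using measurable_Pair2[OF Phi that] by simp
  have TT: "distr (\<nu> \<Otimes>\<^sub>M gam N) (Mh \<Otimes>\<^sub>M BB N) T = \<nu> \<Otimes>\<^sub>M gam N"
  proof (rule measure_eqI)
    show "sets (distr (\<nu> \<Otimes>\<^sub>M gam N) (Mh \<Otimes>\<^sub>M BB N) T) = sets (\<nu> \<Otimes>\<^sub>M gam N)"
      using sets_ng by simp
    fix A assume "A \<in> sets (distr (\<nu> \<Otimes>\<^sub>M gam N) (Mh \<Otimes>\<^sub>M BB N) T)"
    then have A: "A \<in> sets (Mh \<Otimes>\<^sub>M BB N)" by simp
    then have A': "A \<in> sets (\<nu> \<Otimes>\<^sub>M gam N)" using sets_ng by simp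
    have "emeasure (distr (\<nu> \<Otimes>\<^sub>M gam N) (Mh \<Otimes>\<^sub>M BB N) T) A = emeasure (\<nu> \<Otimes>\<^sub>M gam N) (T -` A \<inter> space (\<nu> \<Otimes>\<^sub>M gam N))"
      by (rule emeasure_distr[OF mT' A])
    also have "\<dots> = (\<integral>\<^sup>+h. emeasure (gam N) (Pair h -` (T -` A \<inter> space (\<nu> \<Otimes>\<^sub>M gam N))) \<partial>\<nu>)"
      by (rule sigma_finite_measure.emeasure_pair_measure_alt[OF sf_gam]) (rule measurable_sets[OF mT' A])
    also have "\<dots> = (\<integral>\<^sup>+h. emeasure (gam N) (Pair h -` A) \<partial>\<nu>)"
    proof (rule nn_integral_cong)
      fix h assume h: "h \<in> space \<nu>"
      then have h': "h \<in> space Mh" using snu by simp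
      have PA: "Pair h -` A \<in> sets (BB N)" using A by (rule sets_Pair1)
      have eq: "Pair h -` (T -` A \<inter> space (\<nu> \<Otimes>\<^sub>M gam N)) = Phi h -` (Pair h -` A) \<inter> space (gam N)"
        using h by (auto simp: T_def space_pair_measure)
      have "emeasure (gam N) (Phi h -` (Pair h -` A) \<inter> space (gam N)) = emeasure (distr (gam N) (BB N) (Phi h)) (Pair h -` A)"
        by (rule emeasure_distr[symmetric]) (use meas_gam[OF mPhi_h[OF h']] PA in auto)
      also have "\<dots> = emeasure (gam N) (Pair h -` A)" using inv[OF h'] by simp
      finally show "emeasure (gam N) (Pair h -` (T -` A \<inter> space (\<nu> \<Otimes>\<^sub>M gam N))) = emeasure (gam N) (Pair h -` A)"
        unfolding eq .
    qed
    also have "\<dots> = emeasure (\<nu> \<Otimes>\<^sub>M gam N) A"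
      by (rule sigma_finite_measure.emeasure_pair_measure_alt[OF sf_gam, symmetric]) (rule A')
    finally show "emeasure (distr (\<nu> \<Otimes>\<^sub>M gam N) (Mh \<Otimes>\<^sub>M BB N) T) A = emeasure (\<nu> \<Otimes>\<^sub>M gam N) A" .
  qed
  have mHF: "(\<lambda>x. (H x, F x)) \<in> measurable M (Mh \<Otimes>\<^sub>M BB N)" by measurable
  have J2: "distr M (Mh \<Otimes>\<^sub>M BB N) (\<lambda>\<omega>. (H \<omega>, Phi (H \<omega>) (F \<omega>))) = \<nu> \<Otimes>\<^sub>M gam N"
  proof -
    have "distr M (Mh \<Otimes>\<^sub>M BB N) (\<lambda>\<omega>. (H \<omega>, Phi (H \<omega>) (F \<omega>))) = distr M (Mh \<Otimes>\<^sub>M BB N) (T \<circ> (\<lambda>x. (H x, F x)))"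
      by (simp add: T_def comp_def)
    also have "\<dots> = distr (distr M (Mh \<Otimes>\<^sub>M BB N) (\<lambda>x. (H x, F x))) (Mh \<Otimes>\<^sub>M BB N) T"
      by (rule distr_distr[symmetric, OF mT mHF])
    also have "\<dots> = \<nu> \<Otimes>\<^sub>M gam N" using J TT by simp
    finally show ?thesis .
  qed
  have mPhiHF: "(\<lambda>\<omega>. Phi (H \<omega>) (F \<omega>)) \<in> measurable M (BB N)"
    using measurable_comp[OF mHF Phi] by (simp add: comp_def)
  have mG: "(\<lambda>\<omega>. (H \<omega>, Phi (H \<omega>) (F \<omega>))) \<in> measurable M (Mh \<Otimes>\<^sub>M BB N)"
    using mPhiHF by (auto simp: measurable_pair_iff comp_def)
  have D: "distr M (BB N) (\<lambda>\<omega>. Phi (H \<omega>) (F \<omega>)) = gam N"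
  proof -
    have "distr M (BB N) (\<lambda>\<omega>. Phi (H \<omega>) (F \<omega>)) = distr M (BB N) (snd \<circ> (\<lambda>\<omega>. (H \<omega>, Phi (H \<omega>) (F \<omega>))))"
      by (simp add: comp_def)
    also have "\<dots> = distr (distr M (Mh \<Otimes>\<^sub>M BB N) (\<lambda>\<omega>. (H \<omega>, Phi (H \<omega>) (F \<omega>)))) (BB N) snd"
      by (rule distr_distr[symmetric, OF measurable_snd mG])
    also have "\<dots> = distr (\<nu> \<Otimes>\<^sub>M gam N) (BB N) snd" using J2 by simp
    also have "\<dots> = distr (\<nu> \<Otimes>\<^sub>M gam N) (gam N) snd"
      by (rule distr_cong) (simp_all add: sets_gam)
    also have "\<dots> = gam N" by (rule distr_pair_snd'[OF pnu sf_gam])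
    finally show ?thesis .
  qed
  have "indepP Mh H (BB N) (\<lambda>\<omega>. Phi (H \<omega>) (F \<omega>))"
    unfolding indepP_def using J2 D mPhiHF rvH by (simp add: \<nu>_def)
  then show ?thesis using D by simp
qed


lemma gam_rect_e:
  assumes L: "finite L" "inj_on c L" "\<And>j. j\<in>L \<Longrightarrow> c j \<le> N" "\<And>j. j\<in>L \<Longrightarrow> D j \<in> sets borel"
  shows "emeasure (gam N) {x \<in> space (gam N). \<forall>j\<in>L. x (c j) \<in> D j} = (\<Prod>j\<in>L. emeasure N01 (D j))"
proof -
  define E where "E i = (if i \<in> c ` L then D (the_inv_into L c i) else UNIV)" for i
  have set_eq: "{x \<in> space (gam N). \<forall>j\<in>L. x (c j) \<in> D j} = PiE {..N} E"
  proof (intro set_eqI iffI)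
    fix x assume x: "x \<in> {x \<in> space (gam N). \<forall>j\<in>L. x (c j) \<in> D j}"
    then have xs: "x \<in> PiE {..N} (\<lambda>_. UNIV)" by (simp add: space_gam space_PiM)
    have "x i \<in> E i" if "i \<le> N" for i
    proof (cases "i \<in> c ` L")
      case True
      then obtain j where j: "j \<in> L" "i = c j" by auto
      then show ?thesis using x L(2) by (simp add: E_def the_inv_into_f_f)
    qed (simp add: E_def)
    then show "x \<in> PiE {..N} E" using xs by (auto simp: PiE_iff)
  next
    fix x assume x: "x \<in> PiE {..N} E"
    have "x (c j) \<in> D j" if "j \<in> L" for j
    proof -
      have "x (c j) \<in> E (c j)" using x L(3)[OF that] by (auto simp: PiE_iff)
      then show ?thesis using that L(2) by (simp add: E_def the_inv_into_f_f)
    qed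
    moreover have "x \<in> space (gam N)" using x by (auto simp: space_gam space_PiM PiE_iff)
    ultimately show "x \<in> {x \<in> space (gam N). \<forall>j\<in>L. x (c j) \<in> D j}" by simp
  qed
  have Es: "E i \<in> sets N01" for i
    using L(4) by (auto simp: E_def intro: the_inv_into_into[OF L(2)])
  have "emeasure (gam N) (PiE {..N} E) = (\<Prod>i\<le>N. emeasure N01 (E i))"
    unfolding gam_def using Es by (intro N01p_emeasure_PiM) auto
  also have "\<dots> = (\<Prod>i\<in>c ` L. emeasure N01 (E i))"
  proof (rule prod.mono_neutral_right)
    show "c ` L \<subseteq> {..N}" using L(3) by auto
    show "\<forall>i\<in>{..N} - c ` L. emeasure N01 (E i) = 1"
      using prob_space.emeasure_space_1[OF prob_space_N01] by (simp add: E_def)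
  qed simp
  also have "\<dots> = (\<Prod>j\<in>L. emeasure N01 (E (c j)))"
    using prod.reindex[OF L(2), of "\<lambda>i. emeasure N01 (E i)"] by (simp add: comp_def)
  also have "\<dots> = (\<Prod>j\<in>L. emeasure N01 (D j))"
    using L(2) by (intro prod.cong) (auto simp: E_def the_inv_into_f_f)
  finally show ?thesis unfolding set_eq .
qed

lemma gam_rect:
  assumes L: "finite L" "inj_on c L" "\<And>j. j\<in>L \<Longrightarrow> c j \<le> N" "\<And>j. j\<in>L \<Longrightarrow> D j \<in> sets borel"
  shows "measure (gam N) {x \<in> space (gam N). \<forall>j\<in>L. x (c j) \<in> D j} = (\<Prod>j\<in>L. measure N01 (D j))"
proof -
  interpret G: prob_space "gam N" by (rule prob_space_gam)
  interpret N: prob_space N01 by (rule prob_space_N01)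
  have "ennreal (measure (gam N) {x \<in> space (gam N). \<forall>j\<in>L. x (c j) \<in> D j}) = (\<Prod>j\<in>L. ennreal (measure N01 (D j)))"
    using gam_rect_e[OF L] by (simp add: G.emeasure_eq_measure N.emeasure_eq_measure)
  also have "\<dots> = ennreal (\<Prod>j\<in>L. measure N01 (D j))" by (rule prod_ennreal) simp
  finally show ?thesis by (simp add: prod_nonneg)
qed

lemma (in prob_space) seq_indep:
  fixes out :: "nat \<Rightarrow> 'a \<Rightarrow> nat \<Rightarrow> real" and H :: "nat \<Rightarrow> 'a \<Rightarrow> 'h" and Mh :: "nat \<Rightarrow> 'h measure"
    and X :: "'k \<Rightarrow> 'a \<Rightarrow> real"
  assumes ind: "\<And>T. indepP (Mh T) (H T) (BB N) (out T)"
    and dist: "\<And>T. distr M (BB N) (out T) = gam N"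
    and psim: "\<And>T t. t < T \<Longrightarrow> psi T t \<in> measurable (Mh T) (BB N)"
    and psi: "\<And>T t \<omega>. t < T \<Longrightarrow> \<omega> \<in> space M \<Longrightarrow> out t \<omega> = psi T t (H T \<omega>)"
    and Xeq: "\<And>k \<omega>. k \<in> K \<Longrightarrow> \<omega> \<in> space M \<Longrightarrow> X k \<omega> = f k (out (tau k) \<omega> (crd k))"
    and fm: "\<And>k. k \<in> K \<Longrightarrow> f k \<in> borel_measurable borel"
    and crd: "\<And>k. k \<in> K \<Longrightarrow> crd k \<le> N"
    and inj: "inj_on (\<lambda>k. (tau k, crd k)) K"
  shows "indep_vars (\<lambda>_. borel) X K"
proof -
  have outm: "out T \<in> measurable M (BB N)" for T using ind[of T] by (simp add: indepP_def)
  have Hm: "H T \<in> measurable M (Mh T)" for T using ind[of T] by (simp add: indepP_def)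
  have Xm: "X k \<in> borel_measurable M" if k: "k \<in> K" for k
  proof -
    have "(\<lambda>\<omega>. f k (out (tau k) \<omega> (crd k))) \<in> borel_measurable M"
      using measurable_comp[OF comp_BB[OF outm crd[OF k]] fm[OF k]] by (simp add: comp_def)
    then show ?thesis using Xeq[OF k] by (subst measurable_cong) auto
  qed
  have Dm: "f k -` B \<in> sets borel" if "k \<in> K" "B \<in> sets borel" for k B
    using measurable_sets[OF fm[OF that(1)] that(2)] by simp
  have block: "prob {\<omega> \<in> space M. \<forall>j\<in>L. X j \<omega> \<in> B j} = (\<Prod>j\<in>L. measure N01 (f j -` B j))"
    if L: "L \<subseteq> K" "finite L" "\<And>j. j \<in> L \<Longrightarrow> tau j = T" "\<And>j. j \<in> L \<Longrightarrow> B j \<in> sets borel" for L T B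
  proof -
    define C where "C = {x \<in> space (BB N). \<forall>j\<in>L. x (crd j) \<in> f j -` B j}"
    have Cs: "C \<in> sets (BB N)"
      unfolding C_def
    proof (rule sets.sets_Collect_finite_All[OF _ L(2)])
      fix j assume j: "j \<in> L"
      have "(\<lambda>x. x (crd j)) \<in> measurable (BB N) borel" using crd L(1) j by auto
      then show "{x \<in> space (BB N). x (crd j) \<in> f j -` B j} \<in> sets (BB N)"
        using measurable_sets[OF _ Dm[of j "B j"]] L(1,4) j by (auto simp: vimage_def Int_def conj_commute)
    qed
    have eq: "{\<omega> \<in> space M. \<forall>j\<in>L. X j \<omega> \<in> B j} = out T -` C \<inter> space M"
      using L(1,3) measurable_space[OF outm[of T]] by (auto simp: C_def Xeq subset_eq)
    have "prob (out T -` C \<inter> space M) = measure (distr M (BB N) (out T)) C"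
      by (rule measure_distr[symmetric, OF outm Cs])
    also have "\<dots> = measure (gam N) C" using dist by simp
    also have "\<dots> = (\<Prod>j\<in>L. measure N01 (f j -` B j))"
    proof -
      have inj2: "inj_on crd L"
      proof (rule inj_onI)
        fix x y assume xy: "x \<in> L" "y \<in> L" "crd x = crd y"
        then have "(tau x, crd x) = (tau y, crd y)" using L(3) by simp
        then show "x = y" using inj_onD[OF inj] xy L(1) by blast
      qed
      have "C = {x \<in> space (gam N). \<forall>j\<in>L. x (crd j) \<in> f j -` B j}" by (simp add: C_def space_gam)
      moreover have "measure (gam N) {x \<in> space (gam N). \<forall>j\<in>L. x (crd j) \<in> f j -` B j} = (\<Prod>j\<in>L. measure N01 (f j -` B j))"
        by (rule gam_rect[OF L(2) inj2]) (use crd Dm L in auto)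
      ultimately show ?thesis by simp
    qed
    finally show ?thesis using eq by simp
  qed
  have single: "prob {\<omega> \<in> space M. X j \<omega> \<in> B} = measure N01 (f j -` B)" if "j \<in> K" "B \<in> sets borel" for j B
    using block[of "{j}" "tau j" "\<lambda>_. B"] that by simp
  have claim: "\<forall>J (B::'k \<Rightarrow> real set). J \<subseteq> K \<longrightarrow> finite J \<longrightarrow> (\<forall>j\<in>J. tau j < T) \<longrightarrow> (\<forall>j\<in>J. B j \<in> sets borel) \<longrightarrow>
      prob {\<omega> \<in> space M. \<forall>j\<in>J. X j \<omega> \<in> B j} = (\<Prod>j\<in>J. prob {\<omega> \<in> space M. X j \<omega> \<in> B j})" for T
  proof (induction T)
    case 0 then show ?case by (simp add: prob_space)
  next
    case (Suc T)
    show ?case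
    proof (intro allI impI)
      fix J and B :: "'k \<Rightarrow> real set" assume J: "J \<subseteq> K" "finite J" "\<forall>j\<in>J. tau j < Suc T" and B: "\<forall>j\<in>J. B j \<in> sets borel"
      define J1 where "J1 = {j \<in> J. tau j < T}"
      define J2 where "J2 = {j \<in> J. tau j = T}"
      have JJ0: "J = J1 \<union> J2"
        using J by (auto simp: J1_def J2_def less_Suc_eq)
      have JJ: "J1 \<inter> J2 = {}" "finite J1" "finite J2" "J1 \<subseteq> K" "J2 \<subseteq> K"
        using J by (auto simp: J1_def J2_def less_Suc_eq)
      define C1 where "C1 = {h \<in> space (Mh T). \<forall>j\<in>J1. f j (psi T (tau j) h (crd j)) \<in> B j}"
      define C2 where "C2 = {x \<in> space (BB N). \<forall>j\<in>J2. f j (x (crd j)) \<in> B j}"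
      have C1s: "C1 \<in> sets (Mh T)"
        unfolding C1_def
      proof (rule sets.sets_Collect_finite_All[OF _ JJ(2)])
        fix j assume j: "j \<in> J1"
        then have jK: "j \<in> K" "tau j < T" using J by (auto simp: J1_def)
        have g: "(\<lambda>h. f j (psi T (tau j) h (crd j))) \<in> borel_measurable (Mh T)"
          using measurable_comp[OF comp_BB[OF psim[OF jK(2)] crd[OF jK(1)]] fm[OF jK(1)]] by (simp add: comp_def)
        show "{h \<in> space (Mh T). f j (psi T (tau j) h (crd j)) \<in> B j} \<in> sets (Mh T)"
          using measurable_sets[OF g, of "B j"] B j by (auto simp: vimage_def Int_def conj_commute J1_def)
      qed
      have C2s: "C2 \<in> sets (BB N)"
        unfolding C2_def
      proof (rule sets.sets_Collect_finite_All[OF _ JJ(3)])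
        fix j assume j: "j \<in> J2"
        then have jK: "j \<in> K" using JJ by auto
        have g: "(\<lambda>x. f j (x (crd j))) \<in> borel_measurable (BB N)"
          using measurable_comp[OF comp_BB[OF measurable_ident_sets[OF refl] crd[OF jK]] fm[OF jK]] by (simp add: comp_def)
        show "{x \<in> space (BB N). f j (x (crd j)) \<in> B j} \<in> sets (BB N)"
          using measurable_sets[OF g, of "B j"] B j by (auto simp: vimage_def Int_def conj_commute J2_def)
      qed
      have e1: "H T -` C1 \<inter> space M = {\<omega> \<in> space M. \<forall>j\<in>J1. X j \<omega> \<in> B j}"
        using measurable_space[OF Hm[of T]] J psi by (auto simp: C1_def Xeq J1_def subset_eq)
      have e2: "out T -` C2 \<inter> space M = {\<omega> \<in> space M. \<forall>j\<in>J2. X j \<omega> \<in> B j}"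
        using measurable_space[OF outm[of T]] J by (auto simp: C2_def Xeq J2_def subset_eq)
      have e: "(\<lambda>\<omega>. (H T \<omega>, out T \<omega>)) -` (C1 \<times> C2) \<inter> space M = {\<omega> \<in> space M. \<forall>j\<in>J. X j \<omega> \<in> B j}"
      proof -
        have "(\<lambda>\<omega>. (H T \<omega>, out T \<omega>)) -` (C1 \<times> C2) \<inter> space M = (H T -` C1 \<inter> space M) \<inter> (out T -` C2 \<inter> space M)"
          by auto
        also have "\<dots> = {\<omega> \<in> space M. \<forall>j\<in>J. X j \<omega> \<in> B j}"
          unfolding e1 e2 JJ0 by auto
        finally show ?thesis .
      qed
      have "prob {\<omega> \<in> space M. \<forall>j\<in>J. X j \<omega> \<in> B j} = prob (H T -` C1 \<inter> space M) * prob (out T -` C2 \<inter> space M)"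
        unfolding e[symmetric] by (rule indepP_D[OF ind C1s C2s])
      also have "prob (H T -` C1 \<inter> space M) = (\<Prod>j\<in>J1. prob {\<omega> \<in> space M. X j \<omega> \<in> B j})"
      proof -
        have "J1 \<subseteq> K" "finite J1" "\<forall>j\<in>J1. tau j < T" "\<forall>j\<in>J1. B j \<in> sets borel"
          using J B by (auto simp: J1_def)
        then show ?thesis unfolding e1 using Suc.IH by blast
      qed
      also have "prob (out T -` C2 \<inter> space M) = (\<Prod>j\<in>J2. prob {\<omega> \<in> space M. X j \<omega> \<in> B j})"
      proof -
        have "prob (out T -` C2 \<inter> space M) = (\<Prod>j\<in>J2. measure N01 (f j -` B j))"
          unfolding e2 by (rule block) (use J B in \<open>auto simp: J2_def\<close>)
        also have "\<dots> = (\<Prod>j\<in>J2. prob {\<omega> \<in> space M. X j \<omega> \<in> B j})"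
          using single J B by (intro prod.cong) (auto simp: J2_def)
        finally show ?thesis .
      qed
      also have "(\<Prod>j\<in>J1. prob {\<omega> \<in> space M. X j \<omega> \<in> B j}) * (\<Prod>j\<in>J2. prob {\<omega> \<in> space M. X j \<omega> \<in> B j})
          = (\<Prod>j\<in>J. prob {\<omega> \<in> space M. X j \<omega> \<in> B j})"
        unfolding JJ0 by (rule prod.union_disjoint[symmetric]) (use JJ in auto)
      finally show "prob {\<omega> \<in> space M. \<forall>j\<in>J. X j \<omega> \<in> B j} = (\<Prod>j\<in>J. prob {\<omega> \<in> space M. X j \<omega> \<in> B j})" .
    qed
  qed
  show ?thesis
    unfolding indep_vars_def2
  proof (intro conjI ballI)
    show "\<And>i. i \<in> K \<Longrightarrow> random_variable borel (X i)" using Xm by simp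
    show "indep_sets (\<lambda>i. {X i -` A \<inter> space M |A. A \<in> sets borel}) K"
      unfolding indep_sets_def
    proof (intro conjI ballI allI impI)
      fix i assume "i \<in> K"
      then show "{X i -` A \<inter> space M |A. A \<in> sets borel} \<subseteq> events"
        using measurable_sets[OF Xm] by auto
    next
      fix J A assume J: "J \<subseteq> K" "J \<noteq> {}" "finite J" and A: "A \<in> Pi J (\<lambda>i. {X i -` A \<inter> space M |A. A \<in> sets borel})"
      then have "\<forall>j\<in>J. \<exists>B. B \<in> sets borel \<and> A j = X j -` B \<inter> space M"
        by (auto simp: Pi_iff)
      then obtain B where B: "\<And>j. j \<in> J \<Longrightarrow> B j \<in> sets borel" "\<And>j. j \<in> J \<Longrightarrow> A j = X j -` B j \<inter> space M"
        by metis
      have i1: "(\<Inter>j\<in>J. A j) = {\<omega> \<in> space M. \<forall>j\<in>J. X j \<omega> \<in> B j}" using B J(2) by auto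
      have i2: "A j = {\<omega> \<in> space M. X j \<omega> \<in> B j}" if "j \<in> J" for j using B that by auto
      have "prob {\<omega> \<in> space M. \<forall>j\<in>J. X j \<omega> \<in> B j} = (\<Prod>j\<in>J. prob {\<omega> \<in> space M. X j \<omega> \<in> B j})"
        using claim[of "Suc (Max (tau ` J))"] J B by (auto simp: le_imp_less_Suc)
      then show "prob (\<Inter>j\<in>J. A j) = (\<Prod>j\<in>J. prob (A j))"
        unfolding i1 using i2 by simp
    qed
  qed
qed


lemma (in prob_space) indep_vars_reindex:
  assumes ind: "indep_vars M' X (f ` I)" and inj: "inj_on f I"
  shows "indep_vars (\<lambda>i. M' (f i)) (\<lambda>i. X (f i)) I"
proof -
  have rv: "\<forall>i\<in>f ` I. random_variable (M' i) (X i)"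
    and indS: "indep_sets (\<lambda>i. {X i -` A \<inter> space M |A. A \<in> sets (M' i)}) (f ` I)"
    using ind unfolding indep_vars_def2 by auto
  show ?thesis
    unfolding indep_vars_def2
  proof (intro conjI ballI)
    show "\<And>i. i \<in> I \<Longrightarrow> random_variable (M' (f i)) (X (f i))" using rv by auto
    show "indep_sets (\<lambda>i. {X (f i) -` A \<inter> space M |A. A \<in> sets (M' (f i))}) I"
      unfolding indep_sets_def
    proof (intro conjI ballI allI impI)
      fix i assume "i \<in> I"
      then show "{X (f i) -` A \<inter> space M |A. A \<in> sets (M' (f i))} \<subseteq> events"
        using indS unfolding indep_sets_def by auto
    next
      fix J A assume J: "J \<subseteq> I" "J \<noteq> {}" "finite J"
        and A: "A \<in> Pi J (\<lambda>i. {X (f i) -` A \<inter> space M |A. A \<in> sets (M' (f i))})"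
      define A' where "A' j = A (the_inv_into I f j)" for j
      have injJ: "inj_on f J" using inj J(1) by (rule inj_on_subset)
      have A'f: "A' (f i) = A i" if "i \<in> J" for i
        using J(1) that inj by (simp add: A'_def the_inv_into_f_f subset_eq)
      have "A' \<in> Pi (f ` J) (\<lambda>i. {X i -` A \<inter> space M |A. A \<in> sets (M' i)})"
        using A A'f by (auto simp: Pi_iff)
      then have "prob (\<Inter>j\<in>f ` J. A' j) = (\<Prod>j\<in>f ` J. prob (A' j))"
        using indS J unfolding indep_sets_def by (metis (no_types, lifting) finite_imageI image_is_empty image_mono)
      moreover have "(\<Inter>j\<in>f ` J. A' j) = (\<Inter>i\<in>J. A i)" using A'f by auto
      moreover have "(\<Prod>j\<in>f ` J. prob (A' j)) = (\<Prod>i\<in>J. prob (A i))"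
        using prod.reindex[OF injJ, of "\<lambda>j. prob (A' j)"] A'f by simp
      ultimately show "prob (\<Inter>i\<in>J. A i) = (\<Prod>i\<in>J. prob (A i))" by simp
    qed
  qed
qed

lemma gam_marginal:
  assumes "i \<le> N"
  shows "distr (gam N) borel (\<lambda>x. x i) = N01"
proof (rule measure_eqI)
  show "sets (distr (gam N) borel (\<lambda>x. x i)) = sets N01" by simp
  fix A assume "A \<in> sets (distr (gam N) borel (\<lambda>x. x i))"
  then have A: "A \<in> sets borel" by simp
  have m: "(\<lambda>x. x i) \<in> measurable (gam N) borel"
    using assms by (intro meas_gam) simp
  have "emeasure (distr (gam N) borel (\<lambda>x. x i)) A = emeasure (gam N) {x \<in> space (gam N). \<forall>j\<in>{i}. x ((\<lambda>j. j) j) \<in> (\<lambda>_. A) j}"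
    by (subst emeasure_distr[OF m A]) (auto intro!: arg_cong[where f="emeasure (gam N)"])
  also have "\<dots> = emeasure N01 A"
    using gam_rect_e[of "{i}" "\<lambda>j. j" N "\<lambda>_. A"] assms A by simp
  finally show "emeasure (distr (gam N) borel (\<lambda>x. x i)) A = emeasure N01 A" .
qed

lemma (in prob_space) distributed_N01:
  assumes "distr M (BB N) Y = gam N" "i \<le> N" "Y \<in> measurable M (BB N)"
  shows "distributed M lborel (\<lambda>\<omega>. Y \<omega> i) std_normal_density"
proof -
  have mi: "(\<lambda>\<omega>. Y \<omega> i) \<in> borel_measurable M" using comp_BB[OF assms(3,2)] .
  have "distr M lborel (\<lambda>\<omega>. Y \<omega> i) = distr M borel (\<lambda>\<omega>. Y \<omega> i)"
    by (rule distr_cong) auto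
  also have "\<dots> = distr (distr M (BB N) Y) borel (\<lambda>x. x i)"
    using distr_distr[OF measurable_component_singleton[of i "{..N}" "\<lambda>_. borel"] assms(3)] assms(2)
    by (simp add: comp_def)
  also have "\<dots> = N01" using assms gam_marginal
    by metis
  finally show ?thesis unfolding distributed_def N01_def using mi by simp
qed


locale ek = prob_space M for M :: "'a measure" +
  fixes A B C D P0 Xh0 :: real and N :: nat
    and X0 :: "'a \<Rightarrow> real" and V W :: "nat \<Rightarrow> 'a \<Rightarrow> real"
    and xi0 :: "nat \<Rightarrow> 'a \<Rightarrow> real" and EV EW :: "nat \<Rightarrow> nat \<Rightarrow> 'a \<Rightarrow> real"
  assumes A0: "A \<noteq> 0" and B0: "B \<noteq> 0" and C0: "C \<noteq> 0" and D0: "D \<noteq> 0" and P0: "P0 > 0" and N1: "N \<ge> 1"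
    and dX0: "distributed M lborel X0 (normal_density Xh0 (sqrt P0))"
    and dxi0: "\<And>i. i \<le> N \<Longrightarrow> distributed M lborel (xi0 i) (normal_density Xh0 (sqrt P0))"
    and dV: "\<And>n. distributed M lborel (V n) std_normal_density"
    and dW: "\<And>n. n \<ge> 1 \<Longrightarrow> distributed M lborel (W n) std_normal_density"
    and dEV: "\<And>n i. i \<le> N \<Longrightarrow> distributed M lborel (EV n i) std_normal_density"
    and dEW: "\<And>n i. n \<ge> 1 \<Longrightarrow> i \<le> N \<Longrightarrow> distributed M lborel (EW n i) std_normal_density"
    and indep: "indep_vars (\<lambda>_. borel)
           (\<lambda>s. case s of SX0 \<Rightarrow> X0 | SV n \<Rightarrow> V n | SW n \<Rightarrow> W n | SXi i \<Rightarrow> xi0 i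
                    | SEV n i \<Rightarrow> EV n i | SEW n i \<Rightarrow> EW n i)
           ({SX0} \<union> range SV \<union> SW ` {1..} \<union> SXi ` {..N}
             \<union> {SEV n i |n i. i \<le> N} \<union> {SEW n i |n i. 1 \<le> n \<and> i \<le> N})"
begin

definition Xs :: "src \<Rightarrow> 'a \<Rightarrow> real" where
  "Xs s = (case s of SX0 \<Rightarrow> X0 | SV n \<Rightarrow> V n | SW n \<Rightarrow> W n | SXi i \<Rightarrow> xi0 i
                    | SEV n i \<Rightarrow> EV n i | SEW n i \<Rightarrow> EW n i)"

definition Src :: "src set" where
  "Src = {SX0} \<union> range SV \<union> SW ` {1..} \<union> SXi ` {..N} \<union> {SEV n i |n i. i \<le> N} \<union> {SEW n i |n i. 1 \<le> n \<and> i \<le> N}"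

lemma indep_Xs: "indep_vars (\<lambda>_. borel) Xs Src"
  using indep unfolding Xs_def[abs_def] Src_def .

definition bsrc :: "nat \<Rightarrow> nat \<Rightarrow> src" where
  "bsrc t i = (if t = 0 then SXi i else if odd t then SEV ((t - 1) div 2) i else SEW (t div 2) i)"

definition model :: "src set" where "model = {SX0} \<union> range SV \<union> SW ` {1..}"

definition past :: "nat \<Rightarrow> src set" where "past T = model \<union> (\<Union>t<T. bsrc t ` {..N})"

definition HH :: "nat \<Rightarrow> 'a \<Rightarrow> src \<Rightarrow> real" where "HH T \<omega> = (\<lambda>s\<in>past T. Xs s \<omega>)"

definition stdz :: "nat \<Rightarrow> real \<Rightarrow> real" where "stdz t v = (if t = 0 then (v - Xh0) / sqrt P0 else v)"

definition GG :: "nat \<Rightarrow> 'a \<Rightarrow> nat \<Rightarrow> real" where "GG T \<omega> = (\<lambda>i\<in>{..N}. stdz T (Xs (bsrc T i) \<omega>))"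

definition gT :: "nat \<Rightarrow> (src \<Rightarrow> real) \<Rightarrow> src \<Rightarrow> real" where "gT T h = (\<lambda>s. if s \<in> past T then h s else 0)"

fun Xg :: "(src \<Rightarrow> real) \<Rightarrow> nat \<Rightarrow> real" where
  "Xg g 0 = g SX0"
| "Xg g (Suc k) = A * Xg g k + B * g (SW (Suc k))"

definition Yg :: "(src \<Rightarrow> real) \<Rightarrow> nat \<Rightarrow> real" where "Yg g k = C * Xg g k + D * g (SV k)"

definition xig :: "(src \<Rightarrow> real) \<Rightarrow> nat \<Rightarrow> nat \<Rightarrow> real" where
  "xig g n = enkf_xi N A B C D (\<lambda>i. g (SXi i)) (Yg g) (\<lambda>k i. g (SEV k i)) (\<lambda>k i. g (SEW k i)) n"

definition xihg :: "(src \<Rightarrow> real) \<Rightarrow> nat \<Rightarrow> nat \<Rightarrow> real" where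
  "xihg g n = enkf_update N C D (Yg g n) (\<lambda>i. g (SEV n i)) (xig g n)"

definition adata :: "nat \<Rightarrow> (src \<Rightarrow> real) \<Rightarrow> nat \<Rightarrow> real" where
  "adata T g = (if T = 0 then (\<lambda>_. 0)
     else if odd T then (\<lambda>i. - (D / (C * svar N (xig g ((T - 1) div 2)))) * (xig g ((T - 1) div 2) i - smean N (xig g ((T - 1) div 2))))
     else (\<lambda>i. (A / B) * (xihg g (T div 2 - 1) i - smean N (xihg g (T div 2 - 1)))))"

definition out :: "nat \<Rightarrow> 'a \<Rightarrow> nat \<Rightarrow> real" where
  "out T \<omega> = Orot N (adata T (gT T (HH T \<omega>))) (GG T \<omega>)"

definition fullg :: "'a \<Rightarrow> src \<Rightarrow> real" where "fullg \<omega> = (\<lambda>s. Xs s \<omega>)"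

lemma Xg_full: "Xg (fullg \<omega>) k = model_X A B X0 W k \<omega>"
  by (induction k) (simp_all add: fullg_def Xs_def)

lemma Yg_full: "Yg (fullg \<omega>) k = model_Y A B C D X0 W V k \<omega>"
  by (simp add: Yg_def model_Y_def Xg_full) (simp add: fullg_def Xs_def)

lemma xig_full: "xig (fullg \<omega>) n = ens_xi N A B C D X0 V W xi0 EV EW n \<omega>"
proof -
  have "Yg (fullg \<omega>) = (\<lambda>k. model_Y A B C D X0 W V k \<omega>)" by (rule ext) (simp add: Yg_full)
  then show ?thesis unfolding xig_def ens_xi_def by (simp add: fullg_def Xs_def)
qed

lemma xihg_full: "xihg (fullg \<omega>) n = ens_xih N A B C D X0 V W xi0 EV EW n \<omega>"
  unfolding xihg_def ens_xih_def xig_full Yg_full by (simp add: fullg_def Xs_def)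

lemma smean_cong: "(\<And>i. i \<le> N \<Longrightarrow> x i = x' i) \<Longrightarrow> smean N x = smean N x'"
  unfolding smean_def by (intro arg_cong2[where f="(/)"] sum.cong) auto

lemma svar_cong: "(\<And>i. i \<le> N \<Longrightarrow> x i = x' i) \<Longrightarrow> svar N x = svar N x'"
  unfolding svar_def using smean_cong[of x x'] by (intro arg_cong2[where f="(/)"] sum.cong) auto

lemma update_cong: "(\<And>i. i \<le> N \<Longrightarrow> x i = x' i) \<Longrightarrow> (\<And>i. i \<le> N \<Longrightarrow> v i = v' i) \<Longrightarrow> i \<le> N \<Longrightarrow>
  enkf_update N C D y v x i = enkf_update N C D y v' x' i"
  unfolding enkf_update_def using svar_cong[of x x'] by simp

lemma Xg_cong: "(\<And>s. s \<in> model \<Longrightarrow> g s = g' s) \<Longrightarrow> Xg g k = Xg g' k"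
  by (induction k) (auto simp: model_def)

lemma Yg_cong: "(\<And>s. s \<in> model \<Longrightarrow> g s = g' s) \<Longrightarrow> Yg g k = Yg g' k"
  unfolding Yg_def using Xg_cong[of g g' k] by (auto simp: model_def)

lemma model_past: "model \<subseteq> past T" by (auto simp: past_def)

lemma past_mono: "t \<le> T \<Longrightarrow> past t \<subseteq> past T"
  unfolding past_def by (intro Un_mono subset_refl UN_mono) auto

lemma SXi_past: "0 < T \<Longrightarrow> i \<le> N \<Longrightarrow> SXi i \<in> past T"
  unfolding past_def by (rule UnI2) (auto simp: bsrc_def intro!: bexI[of _ 0] image_eqI[of _ _ i])

lemma SEV_past: "2 * k + 1 < T \<Longrightarrow> i \<le> N \<Longrightarrow> SEV k i \<in> past T"
  unfolding past_def by (rule UnI2) (auto simp: bsrc_def intro!: bexI[of _ "2 * k + 1"] image_eqI[of _ _ i])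

lemma SEW_past: "1 \<le> k \<Longrightarrow> 2 * k < T \<Longrightarrow> i \<le> N \<Longrightarrow> SEW k i \<in> past T"
  unfolding past_def by (rule UnI2) (auto simp: bsrc_def intro!: bexI[of _ "2 * k"] image_eqI[of _ _ i])

lemma xig_cong:
  assumes "\<And>s. s \<in> past (2 * n + 1) \<Longrightarrow> g s = g' s"
  shows "i \<le> N \<Longrightarrow> xig g n i = xig g' n i"
  using assms
proof (induction n arbitrary: i)
  case 0
  then show ?case using SXi_past[of 1 i] by (simp add: xig_def)
next
  case (Suc n)
  have sub: "past (2 * n + 1) \<subseteq> past (2 * Suc n + 1)" by (rule past_mono) simp
  have IH: "xig g n j = xig g' n j" if "j \<le> N" for j
    using Suc.IH[OF that] Suc.prems(2) sub by auto
  have Y: "Yg g n = Yg g' n" using Yg_cong[of g g' n] Suc.prems(2) model_past by auto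
  have EVe: "g (SEV n j) = g' (SEV n j)" if "j \<le> N" for j
    using Suc.prems(2) SEV_past[of n "2 * Suc n + 1" j] that by auto
  have EWe: "g (SEW (Suc n) j) = g' (SEW (Suc n) j)" if "j \<le> N" for j
    using Suc.prems(2) SEW_past[of "Suc n" "2 * Suc n + 1" j] that by auto
  have U: "enkf_update N C D (Yg g n) (\<lambda>i. g (SEV n i)) (xig g n) i = enkf_update N C D (Yg g' n) (\<lambda>i. g' (SEV n i)) (xig g' n) i"
    unfolding Y by (rule update_cong) (use IH EVe Suc.prems(1) in auto)
  show ?case using U EWe[OF Suc.prems(1)] by (simp add: xig_def)
qed

lemma xihg_cong:
  assumes "\<And>s. s \<in> past (2 * n + 2) \<Longrightarrow> g s = g' s" "i \<le> N"
  shows "xihg g n i = xihg g' n i"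
proof -
  have sub: "past (2 * n + 1) \<subseteq> past (2 * n + 2)" by (rule past_mono) simp
  have IH: "xig g n j = xig g' n j" if "j \<le> N" for j
    using xig_cong[OF _ that, of n g g'] assms(1) sub by auto
  have Y: "Yg g n = Yg g' n" using Yg_cong[of g g' n] assms(1) model_past by auto
  have EVe: "g (SEV n j) = g' (SEV n j)" if "j \<le> N" for j
    using assms(1) SEV_past[of n "2 * n + 2" j] that by auto
  show ?thesis unfolding xihg_def Y by (rule update_cong) (use IH EVe assms(2) in auto)
qed

lemma adata_cong:
  assumes "\<And>s. s \<in> past T \<Longrightarrow> g s = g' s" "i \<le> N"
  shows "adata T g i = adata T g' i"
proof (cases "T = 0")
  case True then show ?thesis by (simp add: adata_def)
next
  case F: False
  show ?thesis
  proof (cases "odd T")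
    case True
    define n where "n = (T - 1) div 2"
    have T: "T = 2 * n + 1" using True by (simp add: n_def)
    have e: "xig g n j = xig g' n j" if "j \<le> N" for j using xig_cong[OF _ that, of n g g'] assms(1) T by auto
    have "smean N (xig g n) = smean N (xig g' n)" "svar N (xig g n) = svar N (xig g' n)"
      using e by (auto intro: smean_cong svar_cong)
    then show ?thesis using e[OF assms(2)] unfolding T by (simp add: adata_def)
  next
    case False
    define n where "n = T div 2 - 1"
    have T: "T = 2 * n + 2" using False F unfolding n_def by (auto elim!: evenE)
    have e: "xihg g n j = xihg g' n j" if "j \<le> N" for j using xihg_cong[OF _ that, of n g g'] assms(1) T by auto
    have "smean N (xihg g n) = smean N (xihg g' n)"
      using e by (auto intro: smean_cong)
    then show ?thesis using e[OF assms(2)] unfolding T by (simp add: adata_def)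
  qed
qed

lemma adata_HH: "i \<le> N \<Longrightarrow> adata T (gT T (HH T \<omega>)) i = adata T (fullg \<omega>) i"
  by (rule adata_cong) (simp_all add: gT_def HH_def fullg_def)

lemma Xg_meas:
  assumes q: "\<And>s. (\<lambda>p. q p s) \<in> borel_measurable Mp"
  shows "(\<lambda>p. Xg (q p) k) \<in> borel_measurable Mp"
proof (induction k)
  case 0 then show ?case using q by simp
next
  case (Suc k)
  have [measurable]: "(\<lambda>p. q p (SW (Suc k))) \<in> borel_measurable Mp" using q .
  have [measurable]: "(\<lambda>p. Xg (q p) k) \<in> borel_measurable Mp" using Suc .
  show ?case by simp
qed

lemma Yg_meas:
  assumes q: "\<And>s. (\<lambda>p. q p s) \<in> borel_measurable Mp"
  shows "(\<lambda>p. Yg (q p) k) \<in> borel_measurable Mp"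
proof -
  have [measurable]: "(\<lambda>p. q p (SV k)) \<in> borel_measurable Mp" using q .
  have [measurable]: "(\<lambda>p. Xg (q p) k) \<in> borel_measurable Mp" using Xg_meas[OF q] .
  show ?thesis unfolding Yg_def by simp
qed

lemma smean_meas:
  assumes x: "\<And>i. (\<lambda>p. x p i) \<in> borel_measurable Mp"
  shows "(\<lambda>p. smean N (x p)) \<in> borel_measurable Mp"
proof -
  have [measurable]: "(\<lambda>p. x p i) \<in> borel_measurable Mp" for i using x .
  show ?thesis unfolding smean_def by measurable
qed

lemma svar_meas:
  assumes x: "\<And>i. (\<lambda>p. x p i) \<in> borel_measurable Mp"
  shows "(\<lambda>p. svar N (x p)) \<in> borel_measurable Mp"
proof -
  have [measurable]: "(\<lambda>p. x p i) \<in> borel_measurable Mp" for i using x .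
  have [measurable]: "(\<lambda>p. smean N (x p)) \<in> borel_measurable Mp" using smean_meas[OF x] .
  show ?thesis unfolding svar_def by measurable
qed

lemma upd_meas:
  assumes x: "\<And>i. (\<lambda>p. x p i) \<in> borel_measurable Mp" and v: "\<And>i. (\<lambda>p. v p i) \<in> borel_measurable Mp"
    and y: "y \<in> borel_measurable Mp"
  shows "(\<lambda>p. enkf_update N C D (y p) (v p) (x p) i) \<in> borel_measurable Mp"
proof -
  have [measurable]: "(\<lambda>p. x p i) \<in> borel_measurable Mp" "(\<lambda>p. v p i) \<in> borel_measurable Mp" "y \<in> borel_measurable Mp"
    using x v y by auto
  have [measurable]: "(\<lambda>p. svar N (x p)) \<in> borel_measurable Mp" using svar_meas[OF x] .
  show ?thesis unfolding enkf_update_def gain_def by measurable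
qed

lemma xig_meas:
  assumes q: "\<And>s. (\<lambda>p. q p s) \<in> borel_measurable Mp"
  shows "(\<lambda>p. xig (q p) n i) \<in> borel_measurable Mp"
proof (induction n arbitrary: i)
  case 0 then show ?case using q by (simp add: xig_def)
next
  case (Suc n)
  have u: "(\<lambda>p. enkf_update N C D (Yg (q p) n) (\<lambda>i. q p (SEV n i)) (xig (q p) n) i) \<in> borel_measurable Mp"
    by (rule upd_meas) (use Suc q Yg_meas[OF q] in auto)
  have [measurable]: "(\<lambda>p. q p (SEW (Suc n) i)) \<in> borel_measurable Mp" using q .
  have [measurable]: "(\<lambda>p. enkf_update N C D (Yg (q p) n) (\<lambda>i. q p (SEV n i)) (xig (q p) n) i) \<in> borel_measurable Mp"
    using u .
  have eq: "(\<lambda>p. xig (q p) (Suc n) i) = (\<lambda>p. A * enkf_update N C D (Yg (q p) n) (\<lambda>i. q p (SEV n i)) (xig (q p) n) i + B * q p (SEW (Suc n) i))"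
    by (simp add: xig_def)
  show ?case unfolding eq by measurable
qed

lemma xihg_meas:
  assumes q: "\<And>s. (\<lambda>p. q p s) \<in> borel_measurable Mp"
  shows "(\<lambda>p. xihg (q p) n i) \<in> borel_measurable Mp"
  unfolding xihg_def by (rule upd_meas) (use xig_meas[OF q] q Yg_meas[OF q] in auto)

lemma adata_meas:
  assumes q: "\<And>s. (\<lambda>p. q p s) \<in> borel_measurable Mp"
  shows "(\<lambda>p. adata T (q p) i) \<in> borel_measurable Mp"
proof -
  have [measurable]: "(\<lambda>p. xig (q p) n j) \<in> borel_measurable Mp" for n j using xig_meas[OF q] .
  have [measurable]: "(\<lambda>p. xihg (q p) n j) \<in> borel_measurable Mp" for n j using xihg_meas[OF q] .
  have [measurable]: "(\<lambda>p. svar N (xig (q p) n)) \<in> borel_measurable Mp" for n using svar_meas[OF xig_meas[OF q]] .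
  have [measurable]: "(\<lambda>p. smean N (xig (q p) n)) \<in> borel_measurable Mp" for n using smean_meas[OF xig_meas[OF q]] .
  have [measurable]: "(\<lambda>p. smean N (xihg (q p) n)) \<in> borel_measurable Mp" for n using smean_meas[OF xihg_meas[OF q]] .
  show ?thesis
  proof (cases "T = 0")
    case True then show ?thesis by (simp add: adata_def)
  next
    case False
    show ?thesis
    proof (cases "odd T")
      case True
      have eq: "(\<lambda>p. adata T (q p) i) = (\<lambda>p. - (D / (C * svar N (xig (q p) ((T - 1) div 2)))) * (xig (q p) ((T - 1) div 2) i - smean N (xig (q p) ((T - 1) div 2))))"
        using False True by (simp add: adata_def)
      show ?thesis unfolding eq by measurable
    next
      case F2: False
      have eq: "(\<lambda>p. adata T (q p) i) = (\<lambda>p. (A / B) * (xihg (q p) (T div 2 - 1) i - smean N (xihg (q p) (T div 2 - 1))))"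
        using False F2 by (simp add: adata_def)
      show ?thesis unfolding eq by measurable
    qed
  qed
qed

lemma bsrc_Src: "i \<le> N \<Longrightarrow> bsrc t i \<in> Src"
proof -
  assume i: "i \<le> N"
  consider "t = 0" | "odd t" | "t \<noteq> 0" "even t" by auto
  then show ?thesis
  proof cases
    case 1 then show ?thesis using i by (simp add: bsrc_def Src_def)
  next
    case 2 then show ?thesis using i by (auto simp: bsrc_def Src_def)
  next
    case 3
    then have "1 \<le> t div 2" by (auto elim!: evenE)
    then show ?thesis using 3 i by (auto simp: bsrc_def Src_def)
  qed
qed

lemma bsrc_eq: "bsrc t i = bsrc t' i' \<Longrightarrow> t = t' \<and> i = i'"
  unfolding bsrc_def
  by (auto split: if_splits elim!: oddE evenE)

lemma bsrc_model: "bsrc t i \<notin> model"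
  by (auto simp: bsrc_def model_def)

lemma past_Src: "past T \<subseteq> Src"
  using bsrc_Src unfolding past_def model_def Src_def by auto

lemma blk_past: "t < T \<Longrightarrow> i \<le> N \<Longrightarrow> bsrc t i \<in> past T"
  unfolding past_def by auto

lemma blk_disj: "bsrc T ` {..N} \<inter> past T = {}"
  unfolding past_def using bsrc_model bsrc_eq by fastforce

lemma inj_bsrc: "inj_on (bsrc T) I"
  by (auto intro!: inj_onI dest: bsrc_eq)

lemma Xs_meas: "s \<in> Src \<Longrightarrow> Xs s \<in> borel_measurable M"
  using indep_Xs unfolding indep_vars_def2 by auto

lemma HH_meas: "HH T \<in> measurable M (PiM (past T) (\<lambda>_. borel))"
  unfolding HH_def by (rule measurable_restrict) (use Xs_meas past_Src in auto)

lemma stdz_meas[measurable]: "stdz t \<in> borel_measurable borel"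
  unfolding stdz_def by measurable

lemma GG_meas: "GG T \<in> measurable M (BB N)"
  unfolding GG_def
proof (rule measurable_restrict)
  fix i assume "i \<in> {..N}"
  then have [measurable]: "Xs (bsrc T i) \<in> borel_measurable M" using Xs_meas bsrc_Src by auto
  show "(\<lambda>\<omega>. stdz T (Xs (bsrc T i) \<omega>)) \<in> borel_measurable M" by measurable
qed

lemma indepP_HG: "indepP (PiM (past T) (\<lambda>_. borel)) (HH T) (BB N) (GG T)"
proof -
  have iv: "indep_var (PiM (past T) (\<lambda>_. borel)) (\<lambda>\<omega>. restrict (\<lambda>s. Xs s \<omega>) (past T))
      (PiM (bsrc T ` {..N}) (\<lambda>_. borel)) (\<lambda>\<omega>. restrict (\<lambda>s. Xs s \<omega>) (bsrc T ` {..N}))"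
    by (rule indep_var_restrict[OF indep_Xs]) (use blk_disj past_Src bsrc_Src in auto)
  define gm where "gm = (\<lambda>r. \<lambda>i\<in>{..N}. stdz T (r (bsrc T i)))"
  have gm: "gm \<in> measurable (PiM (bsrc T ` {..N}) (\<lambda>_. borel)) (BB N)"
    unfolding gm_def
  proof (rule measurable_restrict)
    fix i assume "i \<in> {..N}"
    then have [measurable]: "(\<lambda>r. r (bsrc T i)) \<in> borel_measurable (PiM (bsrc T ` {..N}) (\<lambda>_. borel))"
      by simp
    show "(\<lambda>r. stdz T (r (bsrc T i))) \<in> borel_measurable (PiM (bsrc T ` {..N}) (\<lambda>_. borel))"
      by measurable
  qed
  have "indepP (PiM (past T) (\<lambda>_. borel)) (\<lambda>\<omega>. (\<lambda>h. h) (restrict (\<lambda>s. Xs s \<omega>) (past T)))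
      (BB N) (\<lambda>\<omega>. gm (restrict (\<lambda>s. Xs s \<omega>) (bsrc T ` {..N})))"
    by (rule indepP_compose[OF indep_var_indepP[OF iv] measurable_ident_sets[OF refl] gm])
  moreover have "(\<lambda>\<omega>. (\<lambda>h. h) (restrict (\<lambda>s. Xs s \<omega>) (past T))) = HH T"
    by (rule ext) (simp add: HH_def)
  moreover have "(\<lambda>\<omega>. gm (restrict (\<lambda>s. Xs s \<omega>) (bsrc T ` {..N}))) = GG T"
    by (rule ext) (auto simp: GG_def gm_def intro!: restrict_ext)
  ultimately show ?thesis by simp
qed

lemma dist_N01: "distributed M lborel Z std_normal_density \<Longrightarrow> distr M borel Z = N01"
  unfolding distributed_def N01_def
  by (metis (no_types, lifting) distr_cong sets_lborel)

lemma dist_coord: "i \<le> N \<Longrightarrow> distr M borel (\<lambda>\<omega>. stdz T (Xs (bsrc T i) \<omega>)) = N01"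
proof -
  assume i: "i \<le> N"
  consider "T = 0" | "odd T" | "T \<noteq> 0" "even T" by auto
  then show ?thesis
  proof cases
    case 1
    have "distributed M lborel (\<lambda>x. (xi0 i x - Xh0) / sqrt P0) std_normal_density"
      using normal_standard_normal_convert[of "sqrt P0" "xi0 i" Xh0] dxi0[OF i] P0 by simp
    then show ?thesis using 1 by (simp add: stdz_def bsrc_def Xs_def dist_N01)
  next
    case 2
    then have "T \<noteq> 0" by (metis odd_pos not_gr_zero)
    then show ?thesis using 2 dEV[OF i] by (simp add: stdz_def bsrc_def Xs_def dist_N01)
  next
    case 3
    then have "1 \<le> T div 2" by (auto elim!: evenE)
    then show ?thesis using 3 dEW[OF _ i] by (simp add: stdz_def bsrc_def Xs_def dist_N01)
  qed
qed

lemma distr_GG: "distr M (BB N) (GG T) = gam N"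
proof -
  have i1: "indep_vars (\<lambda>_. borel) Xs (bsrc T ` {..N})"
    by (rule indep_vars_subset[OF indep_Xs]) (use bsrc_Src in auto)
  have i2: "indep_vars (\<lambda>_. borel) (\<lambda>i. Xs (bsrc T i)) {..N}"
    using indep_vars_reindex[OF i1 inj_bsrc] by simp
  have i3: "indep_vars (\<lambda>_. borel) (\<lambda>i \<omega>. stdz T (Xs (bsrc T i) \<omega>)) {..N}"
    by (rule indep_vars_compose2[OF i2]) simp
  have rv: "\<And>i. i \<in> {..N} \<Longrightarrow> random_variable borel (\<lambda>\<omega>. stdz T (Xs (bsrc T i) \<omega>))"
    using i3 unfolding indep_vars_def2 by auto
  have "distr M (PiM {..N} (\<lambda>_. borel)) (\<lambda>x. \<lambda>i\<in>{..N}. stdz T (Xs (bsrc T i) x)) = PiM {..N} (\<lambda>i. distr M borel (\<lambda>\<omega>. stdz T (Xs (bsrc T i) \<omega>)))"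
    using indep_vars_iff_distr_eq_PiM'[where I="{..N}" and M'="\<lambda>_. borel" and X="\<lambda>i \<omega>. stdz T (Xs (bsrc T i) \<omega>)"] i3 rv by auto
  also have "\<dots> = PiM {..N} (\<lambda>_. N01)"
    by (rule PiM_cong) (auto simp: dist_coord)
  finally show ?thesis unfolding GG_def gam_def .
qed

lemma gT_meas:
  assumes "past t \<subseteq> J"
  shows "(\<lambda>h. gT t h s) \<in> borel_measurable (PiM J (\<lambda>_. borel))"
proof (cases "s \<in> past t")
  case True
  then have "s \<in> J" using assms by auto
  then show ?thesis using True by (simp add: gT_def)
qed (simp add: gT_def)

lemma out_props: "indepP (PiM (past T) (\<lambda>_. borel)) (HH T) (BB N) (out T) \<and> distr M (BB N) (out T) = gam N"
proof -
  let ?Mh = "PiM (past T) (\<lambda>_. borel)"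
  have q: "(\<lambda>p. gT T (fst p) s) \<in> borel_measurable (?Mh \<Otimes>\<^sub>M BB N)" for s
    using measurable_comp[OF measurable_fst gT_meas[of T "past T" s]] by (simp add: comp_def)
  have Phi: "(\<lambda>p. Orot N (adata T (gT T (fst p))) (snd p)) \<in> measurable (?Mh \<Otimes>\<^sub>M BB N) (BB N)"
    by (rule Orot_meas[OF N1]) (use adata_meas[OF q] comp_BB[OF measurable_snd] in auto)
  have Phi': "(\<lambda>(h, x). Orot N (adata T (gT T h)) x) \<in> measurable (?Mh \<Otimes>\<^sub>M BB N) (BB N)"
    using Phi by (simp add: split_beta')
  have "indepP ?Mh (HH T) (BB N) (\<lambda>\<omega>. Orot N (adata T (gT T (HH T \<omega>))) (GG T \<omega>)) \<and>
      distr M (BB N) (\<lambda>\<omega>. Orot N (adata T (gT T (HH T \<omega>))) (GG T \<omega>)) = gam N"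
    by (rule indep_rot[OF indepP_HG distr_GG Phi' Orot_mp[OF N1]])
  then show ?thesis by (simp add: out_def[abs_def])
qed

definition psi :: "nat \<Rightarrow> nat \<Rightarrow> (src \<Rightarrow> real) \<Rightarrow> nat \<Rightarrow> real" where
  "psi T t h = Orot N (adata t (gT t h)) (\<lambda>i\<in>{..N}. stdz t (h (bsrc t i)))"

lemma psi_meas: "t < T \<Longrightarrow> psi T t \<in> measurable (PiM (past T) (\<lambda>_. borel)) (BB N)"
proof -
  assume tT: "t < T"
  have sub: "past t \<subseteq> past T" using tT by (intro past_mono) simp
  have x: "(\<lambda>h. (\<lambda>i\<in>{..N}. stdz t (h (bsrc t i))) i) \<in> borel_measurable (PiM (past T) (\<lambda>_. borel))" if "i \<le> N" for i
  proof -
    have [measurable]: "(\<lambda>h. h (bsrc t i)) \<in> borel_measurable (PiM (past T) (\<lambda>_. borel))"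
      using blk_past[OF tT that] by simp
    show ?thesis using that by simp
  qed
  show ?thesis unfolding psi_def[abs_def]
    by (rule Orot_meas[OF N1]) (use adata_meas[OF gT_meas[OF sub]] x in auto)
qed

lemma psi_out: "t < T \<Longrightarrow> out t \<omega> = psi T t (HH T \<omega>)"
proof -
  assume tT: "t < T"
  have sub: "past t \<subseteq> past T" using tT by (intro past_mono) simp
  have g: "gT t (HH t \<omega>) = gT t (HH T \<omega>)"
    using sub by (intro ext) (auto simp: gT_def HH_def)
  have G: "GG t \<omega> = (\<lambda>i\<in>{..N}. stdz t (HH T \<omega> (bsrc t i)))"
    using blk_past[OF tT] by (auto simp: GG_def HH_def intro!: restrict_ext)
  show ?thesis unfolding out_def psi_def g G ..
qed

lemma sumN: "(\<Sum>i<Suc N. f i) = (\<Sum>i\<le>N. f i)"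
  by (simp add: lessThan_Suc_atMost)

lemma smean_alt: "smean N x = (\<Sum>i\<le>N. x i) / real (Suc N)"
  unfolding smean_def lessThan_Suc_atMost ..

lemma svar_alt: "svar N x = (\<Sum>i\<le>N. (x i - smean N x)\<^sup>2) / real N"
  unfolding svar_def lessThan_Suc_atMost ..

lemma dev_sum0: "(\<Sum>i\<le>N. x i - smean N x) = 0"
  by (simp add: sum_subtractf smean_alt del: of_nat_Suc)

lemma dev_sq: "(\<Sum>i\<le>N. (x i - smean N x)\<^sup>2) = real N * svar N x"
  using N1 by (simp add: svar_alt)

lemma svar_nonneg: "svar N x \<ge> 0"
  by (simp add: svar_def sum_nonneg)

lemma svar_affine:
  assumes y: "\<And>i. i \<le> N \<Longrightarrow> y i = c * (g i + a i) + d" and a0: "(\<Sum>i\<le>N. a i) = 0"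
  shows "svar N y = c\<^sup>2 / real N * (\<Sum>i\<le>N. (g i - (\<Sum>j\<le>N. g j) / real (Suc N) + a i)\<^sup>2)"
proof -
  have my: "smean N y = c * ((\<Sum>j\<le>N. g j) / real (Suc N)) + d"
  proof -
    have "(\<Sum>i\<le>N. y i) = (\<Sum>i\<le>N. c * g i + c * a i + d)" using y by (intro sum.cong) (auto simp: algebra_simps)
    also have "\<dots> = c * (\<Sum>i\<le>N. g i) + c * (\<Sum>i\<le>N. a i) + real (Suc N) * d"
      by (simp add: sum.distrib sum_distrib_left)
    finally show ?thesis using a0 by (simp add: smean_alt field_simps del: of_nat_Suc)
  qed
  have "svar N y = (\<Sum>i\<le>N. (c * (g i - (\<Sum>j\<le>N. g j) / real (Suc N) + a i))\<^sup>2) / real N"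
    unfolding svar_alt by (intro arg_cong2[where f="(/)"] sum.cong) (auto simp: y my algebra_simps)
  also have "\<dots> = c\<^sup>2 / real N * (\<Sum>i\<le>N. (g i - (\<Sum>j\<le>N. g j) / real (Suc N) + a i)\<^sup>2)"
    by (simp add: power_mult_distrib sum_distrib_left[symmetric])
  finally show ?thesis .
qed

lemma Orot_cong: "(\<And>i. i \<le> N \<Longrightarrow> a i = a' i) \<Longrightarrow> Orot N a x = Orot N a' x"
  unfolding Orot_def by (subst acc_cong[of N N a a']) auto

lemma out_full: "out T \<omega> = Orot N (adata T (fullg \<omega>)) (GG T \<omega>)"
  unfolding out_def by (rule Orot_cong) (rule adata_HH)

lemma out_dev:
  assumes a0: "(\<Sum>i\<le>N. adata T (fullg \<omega>) i) = 0"
  shows "(\<Sum>i<N. (out T \<omega> i + sqrt (\<Sum>i\<le>N. (adata T (fullg \<omega>) i)\<^sup>2) / sqrt N)\<^sup>2)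
       = (\<Sum>i\<le>N. (GG T \<omega> i - (\<Sum>j\<le>N. GG T \<omega> j) / real (Suc N) + adata T (fullg \<omega>) i)\<^sup>2)"
  unfolding out_full by (rule Orot_dev[OF N1 a0])

lemma out_last: "out T \<omega> N = (\<Sum>i\<le>N. GG T \<omega> i) / sqrt (Suc N)"
  unfolding out_full by (rule Orot_last[OF N1])

lemma sqrt_div: "sqrt (real (Suc N)) * (x / real (Suc N)) = x / sqrt (real (Suc N))"
proof -
  have s: "real (Suc N) = sqrt (real (Suc N)) * sqrt (real (Suc N))" by simp
  have "sqrt (real (Suc N)) > 0" by simp
  then show ?thesis by (subst (2) s) (simp add: field_simps)
qed

lemma svar0_dev: "svar N x = 0 \<Longrightarrow> i \<le> N \<Longrightarrow> x i - smean N x = 0"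
proof -
  assume s: "svar N x = 0" and i: "i \<le> N"
  have "(\<Sum>i\<le>N. (x i - smean N x)\<^sup>2) = 0" using dev_sq[of x] s by simp
  then have "\<forall>i\<in>{..N}. (x i - smean N x)\<^sup>2 = 0" by (subst (asm) sum_nonneg_eq_0_iff) auto
  then show ?thesis using i by auto
qed

lemma GG0: "i \<le> N \<Longrightarrow> GG 0 \<omega> i = (xi0 i \<omega> - Xh0) / sqrt P0"
  by (simp add: GG_def stdz_def bsrc_def Xs_def)

lemma GG_odd: "i \<le> N \<Longrightarrow> GG (2 * n + 1) \<omega> i = EV n i \<omega>"
  by (simp add: GG_def stdz_def bsrc_def Xs_def)

lemma GG_even: "i \<le> N \<Longrightarrow> GG (2 * n + 2) \<omega> i = EW (Suc n) i \<omega>"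
proof -
  assume "i \<le> N"
  moreover have "(2 * n + 2) div 2 = Suc n" by simp
  ultimately show ?thesis by (simp add: GG_def stdz_def bsrc_def Xs_def)
qed

lemma adata0: "adata 0 g = (\<lambda>_. 0)" by (simp add: adata_def)

lemma adata_odd: "adata (2 * n + 1) g = (\<lambda>i. - (D / (C * svar N (xig g n))) * (xig g n i - smean N (xig g n)))"
  by (simp add: adata_def)

lemma adata_even: "adata (2 * n + 2) g = (\<lambda>i. (A / B) * (xihg g n i - smean N (xihg g n)))"
proof -
  have "(2 * n + 2) div 2 - 1 = n" by simp
  then show ?thesis by (simp add: adata_def)
qed

lemma p0_id: "ens_p N A B C D X0 V W xi0 EV EW 0 \<omega> = P0 / real N * (\<Sum>i<N. (out 0 \<omega> i)\<^sup>2)"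
proof -
  have e: "(\<Sum>i<N. (out 0 \<omega> i + sqrt (\<Sum>i\<le>N. (adata 0 (fullg \<omega>) i)\<^sup>2) / sqrt N)\<^sup>2)
       = (\<Sum>i\<le>N. (GG 0 \<omega> i - (\<Sum>j\<le>N. GG 0 \<omega> j) / real (Suc N) + adata 0 (fullg \<omega>) i)\<^sup>2)"
    by (rule out_dev) (simp add: adata0)
  have y: "ens_xi N A B C D X0 V W xi0 EV EW 0 \<omega> i = sqrt P0 * (GG 0 \<omega> i + adata 0 (fullg \<omega>) i) + Xh0" if "i \<le> N" for i
    using that P0 by (simp add: ens_xi_def GG0 adata0)
  have "ens_p N A B C D X0 V W xi0 EV EW 0 \<omega> = (sqrt P0)\<^sup>2 / real N * (\<Sum>i\<le>N. (GG 0 \<omega> i - (\<Sum>j\<le>N. GG 0 \<omega> j) / real (Suc N) + adata 0 (fullg \<omega>) i)\<^sup>2)"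
    unfolding ens_p_def by (rule svar_affine) (use y in \<open>auto simp: adata0\<close>)
  also have "\<dots> = P0 / real N * (\<Sum>i<N. (out 0 \<omega> i)\<^sup>2)"
    using P0 e[symmetric] by (simp add: adata0)
  finally show ?thesis .
qed

lemma ph_id:
  "ens_ph N A B C D X0 V W xi0 EV EW n \<omega> =
     (ens_p N A B C D X0 V W xi0 EV EW n \<omega> / (1 + (C / D)\<^sup>2 * ens_p N A B C D X0 V W xi0 EV EW n \<omega>))\<^sup>2
       * ((C / D)\<^sup>2 / real N)
       * (\<Sum>i<N. (out (2 * n + 1) \<omega> i + sqrt (1 / ((C / D)\<^sup>2 * ens_p N A B C D X0 V W xi0 EV EW n \<omega>)))\<^sup>2)"
proof -
  define S where "S = (C / D)\<^sup>2"
  define xi where "xi = xig (fullg \<omega>) n"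
  define m where "m = smean N xi"
  define p where "p = svar N xi"
  have p_eq: "ens_p N A B C D X0 V W xi0 EV EW n \<omega> = p"
    by (simp add: p_def xi_def ens_p_def xig_full)
  define a where "a = adata (2 * n + 1) (fullg \<omega>)"
  have a_eq: "a i = - (D / (C * p)) * (xi i - m)" for i
    unfolding a_def adata_odd by (simp add: p_def m_def xi_def)
  have p0: "p \<ge> 0" by (simp add: p_def svar_nonneg)
  have a0: "(\<Sum>i\<le>N. a i) = 0"
  proof -
    have "(\<Sum>i\<le>N. a i) = (\<Sum>i\<le>N. (- (D / (C * p))) * (xi i - m))" by (simp only: a_eq)
    also have "\<dots> = (- (D / (C * p))) * (\<Sum>i\<le>N. xi i - m)" by (rule sum_distrib_left[symmetric])
    finally show ?thesis using dev_sum0[of xi] by (simp add: m_def)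
  qed
  have asq: "(\<Sum>i\<le>N. (a i)\<^sup>2) = (D / (C * p))\<^sup>2 * (real N * p)"
  proof -
    have "(\<Sum>i\<le>N. (a i)\<^sup>2) = (\<Sum>i\<le>N. (D / (C * p))\<^sup>2 * (xi i - m)\<^sup>2)"
      by (simp only: a_eq power_mult_distrib power2_minus)
    also have "\<dots> = (D / (C * p))\<^sup>2 * (\<Sum>i\<le>N. (xi i - m)\<^sup>2)" by (rule sum_distrib_left[symmetric])
    finally show ?thesis using dev_sq[of xi] by (simp add: m_def p_def)
  qed
  have cT: "sqrt (\<Sum>i\<le>N. (a i)\<^sup>2) / sqrt N = sqrt (1 / (S * p))"
  proof -
    have Npos: "sqrt (real N) > 0" using N1 by simp
    have "(D / (C * p))\<^sup>2 * (real N * p) = real N * ((D / (C * p))\<^sup>2 * p)" by simp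
    then have "sqrt (\<Sum>i\<le>N. (a i)\<^sup>2) = sqrt (real N) * sqrt ((D / (C * p))\<^sup>2 * p)"
      unfolding asq by (simp only: real_sqrt_mult)
    then have "sqrt (\<Sum>i\<le>N. (a i)\<^sup>2) / sqrt N = sqrt ((D / (C * p))\<^sup>2 * p)"
      using Npos by simp
    also have "(D / (C * p))\<^sup>2 * p = 1 / (S * p)"
      using C0 D0 by (cases "p = 0") (simp_all add: S_def field_simps power2_eq_square)
    finally show ?thesis .
  qed
  define gn where "gn = gain C D p"
  define Y where "Y = Yg (fullg \<omega>) n"
  define c where "c = - gn * D"
  define d where "d = (1 - gn * C) * m + gn * Y"
  have den: "C\<^sup>2 * p + D\<^sup>2 > 0" using D0 p0 by (simp add: add_nonneg_pos)
  have y: "ens_xih N A B C D X0 V W xi0 EV EW n \<omega> i = c * (GG (2 * n + 1) \<omega> i + a i) + d" if i: "i \<le> N" for i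
  proof -
    have yi: "ens_xih N A B C D X0 V W xi0 EV EW n \<omega> i = xi i + gn * (Y - C * xi i - D * EV n i \<omega>)"
      by (simp add: xihg_full[symmetric] xihg_def enkf_update_def xi_def Y_def gn_def p_def fullg_def Xs_def)
    have G: "GG (2 * n + 1) \<omega> i = EV n i \<omega>" by (rule GG_odd[OF i])
    have main: "ens_xih N A B C D X0 V W xi0 EV EW n \<omega> i = c * (EV n i \<omega> + a i) + d"
    proof (cases "p = 0")
      case True
      then have "xi i - m = 0" using svar0_dev[of xi i] i by (simp add: p_def m_def)
      then show ?thesis using True by (simp add: yi a_eq c_def d_def gn_def gain_def algebra_simps)
    next
      case False
      have k: "1 - gn * C = gn * (D * (D / (C * p)))"
        using False C0 den by (simp add: gn_def gain_def field_simps power2_eq_square)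
      have "c * (EV n i \<omega> + a i) + d = xi i + gn * (Y - C * xi i - D * EV n i \<omega>) + ((gn * (D * (D / (C * p)))) - (1 - gn * C)) * (xi i - m)"
        using False C0 by (simp add: a_eq c_def d_def field_simps)
      then show ?thesis using k yi by simp
    qed
    show ?thesis unfolding G by (rule main)
  qed
  have c2: "c\<^sup>2 = (p / (1 + S * p))\<^sup>2 * S"
  proof -
    have "1 + S * p = (C\<^sup>2 * p + D\<^sup>2) / D\<^sup>2" using D0 by (simp add: S_def field_simps power2_eq_square)
    then show ?thesis using D0 den by (simp add: c_def gn_def gain_def S_def field_simps power2_eq_square)
  qed
  have "ens_ph N A B C D X0 V W xi0 EV EW n \<omega> = c\<^sup>2 / real N * (\<Sum>i\<le>N. (GG (2 * n + 1) \<omega> i - (\<Sum>j\<le>N. GG (2 * n + 1) \<omega> j) / real (Suc N) + a i)\<^sup>2)"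
    unfolding ens_ph_def by (rule svar_affine[OF y a0])
  also have "\<dots> = c\<^sup>2 / real N * (\<Sum>i<N. (out (2 * n + 1) \<omega> i + sqrt (\<Sum>i\<le>N. (a i)\<^sup>2) / sqrt N)\<^sup>2)"
    using out_dev[of "2 * n + 1" \<omega>] a0 unfolding a_def by simp
  finally show ?thesis unfolding cT c2 p_eq S_def by (simp add: mult.commute mult.left_commute)
qed

lemma xi_Suc: "ens_xi N A B C D X0 V W xi0 EV EW (Suc n) \<omega> i =
    A * ens_xih N A B C D X0 V W xi0 EV EW n \<omega> i + B * EW (Suc n) i \<omega>"
  by (simp add: ens_xi_def ens_xih_def)

lemma smean_lin: "smean N (\<lambda>i. a * x i + b * y i + c) = a * smean N x + b * smean N y + c"
  by (simp add: smean_alt sum.distrib sum_distrib_left[symmetric] field_simps del: of_nat_Suc)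

lemma pS_id:
  "ens_p N A B C D X0 V W xi0 EV EW (Suc n) \<omega> =
     B\<^sup>2 / real N * (\<Sum>i<N. (out (2 * n + 2) \<omega> i + sqrt (A\<^sup>2 * ens_ph N A B C D X0 V W xi0 EV EW n \<omega> / B\<^sup>2))\<^sup>2)"
proof -
  define xh where "xh = xihg (fullg \<omega>) n"
  define mh where "mh = smean N xh"
  define ph where "ph = svar N xh"
  have ph_eq: "ens_ph N A B C D X0 V W xi0 EV EW n \<omega> = ph"
    by (simp add: ph_def xh_def ens_ph_def xihg_full)
  define a where "a = adata (2 * n + 2) (fullg \<omega>)"
  have a_eq: "a i = (A / B) * (xh i - mh)" for i
    unfolding a_def adata_even by (simp add: mh_def xh_def)
  have a0: "(\<Sum>i\<le>N. a i) = 0"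
  proof -
    have "(\<Sum>i\<le>N. a i) = (\<Sum>i\<le>N. (A / B) * (xh i - mh))" by (simp only: a_eq)
    also have "\<dots> = (A / B) * (\<Sum>i\<le>N. xh i - mh)" by (rule sum_distrib_left[symmetric])
    finally show ?thesis using dev_sum0[of xh] by (simp add: mh_def)
  qed
  have asq: "(\<Sum>i\<le>N. (a i)\<^sup>2) = (A / B)\<^sup>2 * (real N * ph)"
  proof -
    have "(\<Sum>i\<le>N. (a i)\<^sup>2) = (\<Sum>i\<le>N. (A / B)\<^sup>2 * (xh i - mh)\<^sup>2)"
      by (simp only: a_eq power_mult_distrib)
    also have "\<dots> = (A / B)\<^sup>2 * (\<Sum>i\<le>N. (xh i - mh)\<^sup>2)" by (rule sum_distrib_left[symmetric])
    finally show ?thesis using dev_sq[of xh] by (simp add: mh_def ph_def)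
  qed
  have cT: "sqrt (\<Sum>i\<le>N. (a i)\<^sup>2) / sqrt N = sqrt (A\<^sup>2 * ph / B\<^sup>2)"
  proof -
    have Npos: "sqrt (real N) > 0" using N1 by simp
    have "(A / B)\<^sup>2 * (real N * ph) = real N * ((A / B)\<^sup>2 * ph)" by simp
    then have "sqrt (\<Sum>i\<le>N. (a i)\<^sup>2) = sqrt (real N) * sqrt ((A / B)\<^sup>2 * ph)"
      unfolding asq by (simp only: real_sqrt_mult)
    then have "sqrt (\<Sum>i\<le>N. (a i)\<^sup>2) / sqrt N = sqrt ((A / B)\<^sup>2 * ph)"
      using Npos by simp
    also have "(A / B)\<^sup>2 * ph = A\<^sup>2 * ph / B\<^sup>2" by (simp add: power_divide)
    finally show ?thesis .
  qed
  have y: "ens_xi N A B C D X0 V W xi0 EV EW (Suc n) \<omega> i = B * (GG (2 * n + 2) \<omega> i + a i) + A * mh" if i: "i \<le> N" for i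
  proof -
    have G: "GG (2 * n + 2) \<omega> i = EW (Suc n) i \<omega>" by (rule GG_even[OF i])
    have main: "ens_xi N A B C D X0 V W xi0 EV EW (Suc n) \<omega> i = B * (EW (Suc n) i \<omega> + a i) + A * mh"
      using B0 by (simp add: xi_Suc a_eq xh_def xihg_full field_simps)
    show ?thesis unfolding G by (rule main)
  qed
  have "ens_p N A B C D X0 V W xi0 EV EW (Suc n) \<omega> = B\<^sup>2 / real N * (\<Sum>i\<le>N. (GG (2 * n + 2) \<omega> i - (\<Sum>j\<le>N. GG (2 * n + 2) \<omega> j) / real (Suc N) + a i)\<^sup>2)"
    unfolding ens_p_def by (rule svar_affine[OF y a0])
  also have "\<dots> = B\<^sup>2 / real N * (\<Sum>i<N. (out (2 * n + 2) \<omega> i + sqrt (\<Sum>i\<le>N. (a i)\<^sup>2) / sqrt N)\<^sup>2)"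
    using out_dev[of "2 * n + 2" \<omega>] a0 unfolding a_def by simp
  finally show ?thesis unfolding cT ph_eq .
qed

lemma eta_id: "(\<Sum>i<Suc N. EV n i \<omega>) / sqrt (real (Suc N)) = out (2 * n + 1) \<omega> N"
proof -
  have "(\<Sum>i\<le>N. GG (2 * n + 1) \<omega> i) = (\<Sum>i\<le>N. EV n i \<omega>)" by (rule sum.cong[OF refl]) (rule GG_odd, simp)
  then show ?thesis unfolding out_last sumN by simp
qed

lemma u0_id: "ens_u0 N A B C D Xh0 X0 V W xi0 EV EW \<omega> = sqrt P0 * out 0 \<omega> N"
proof -
  have "(\<Sum>i\<le>N. GG 0 \<omega> i) = (\<Sum>i\<le>N. xi0 i \<omega> - Xh0) / sqrt P0"
    by (simp add: GG0 sum_divide_distrib)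
  then have r: "sqrt P0 * out 0 \<omega> N = (\<Sum>i\<le>N. xi0 i \<omega> - Xh0) / sqrt (real (Suc N))"
    using P0 unfolding out_last by simp
  have "ens_m N A B C D X0 V W xi0 EV EW 0 \<omega> - Xh0 = (\<Sum>i\<le>N. xi0 i \<omega> - Xh0) / real (Suc N)"
    by (simp add: ens_m_def ens_xi_def smean_alt sum_subtractf field_simps del: of_nat_Suc)
  then show ?thesis unfolding ens_u0_def r by (simp only: sqrt_div)
qed

lemma u_id: "ens_u N A B C D X0 V W xi0 EV EW n \<omega> = B * out (2 * n + 2) \<omega> N"
proof -
  have "(\<Sum>i\<le>N. GG (2 * n + 2) \<omega> i) = (\<Sum>i\<le>N. EW (Suc n) i \<omega>)" by (rule sum.cong[OF refl]) (rule GG_even, simp)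
  then have r: "B * out (2 * n + 2) \<omega> N = B * (\<Sum>i\<le>N. EW (Suc n) i \<omega>) / sqrt (real (Suc N))"
    unfolding out_last by simp
  have "ens_m N A B C D X0 V W xi0 EV EW (Suc n) \<omega> = A * ens_mh N A B C D X0 V W xi0 EV EW n \<omega> + B * smean N (\<lambda>i. EW (Suc n) i \<omega>)"
    unfolding ens_m_def ens_mh_def using smean_lin[of A "ens_xih N A B C D X0 V W xi0 EV EW n \<omega>" B "\<lambda>i. EW (Suc n) i \<omega>" 0]
    by (simp add: xi_Suc[abs_def])
  then have "ens_m N A B C D X0 V W xi0 EV EW (Suc n) \<omega> - A * ens_mh N A B C D X0 V W xi0 EV EW n \<omega> = B * (\<Sum>i\<le>N. EW (Suc n) i \<omega>) / real (Suc N)"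
    by (simp add: smean_alt)
  then show ?thesis unfolding ens_u_def r by (simp only: sqrt_div)
qed

lemma uh_id: "ens_uh N A B C D X0 V W xi0 EV EW n \<omega> = - ens_g N A B C D X0 V W xi0 EV EW n \<omega> * D * ((\<Sum>i<Suc N. EV n i \<omega>) / sqrt (real (Suc N)))"
proof -
  define x where "x = ens_xi N A B C D X0 V W xi0 EV EW n \<omega>"
  define y where "y = model_Y A B C D X0 W V n \<omega>"
  define g where "g = gain C D (svar N x)"
  have xh: "ens_xih N A B C D X0 V W xi0 EV EW n \<omega> = (\<lambda>i. (1 - g * C) * x i + (- g * D) * EV n i \<omega> + g * y)"
    by (rule ext) (simp add: ens_xih_def enkf_update_def x_def y_def g_def algebra_simps ens_xi_def)
  have mh: "ens_mh N A B C D X0 V W xi0 EV EW n \<omega> = (1 - g * C) * smean N x + (- g * D) * smean N (\<lambda>i. EV n i \<omega>) + g * y"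
    unfolding ens_mh_def xh by (rule smean_lin)
  have d: "ens_mh N A B C D X0 V W xi0 EV EW n \<omega> - smean N x - g * (y - C * smean N x) = - g * D * smean N (\<lambda>i. EV n i \<omega>)"
    unfolding mh by (simp add: algebra_simps)
  have "ens_uh N A B C D X0 V W xi0 EV EW n \<omega> = sqrt (real (Suc N)) * (- g * D * smean N (\<lambda>i. EV n i \<omega>))"
    unfolding ens_uh_def ens_m_def ens_g_def ens_p_def x_def[symmetric] y_def[symmetric] g_def[symmetric] d ..
  also have "\<dots> = - g * D * (sqrt (real (Suc N)) * ((\<Sum>i\<le>N. EV n i \<omega>) / real (Suc N)))"
    unfolding smean_alt by simp
  also have "\<dots> = - g * D * ((\<Sum>i\<le>N. EV n i \<omega>) / sqrt (real (Suc N)))"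
    by (simp only: sqrt_div)
  finally show ?thesis by (simp only: ens_g_def ens_p_def x_def[symmetric] g_def[symmetric] sumN)
qed

lemma eta_id2: "((\<Sum>i<N. EV n i \<omega>) + EV n N \<omega>) / sqrt (1 + real N) = out (Suc (2 * n)) \<omega> N"
  using eta_id[of n \<omega>] by simp

definition tau :: "zidx \<Rightarrow> nat" where
  "tau k = (case k of IZ0 i \<Rightarrow> 0 | IZh n i \<Rightarrow> 2 * n + 1 | IZ n i \<Rightarrow> 2 * n + 2 | IU0 \<Rightarrow> 0 | IEta n \<Rightarrow> 2 * n + 1 | IU n \<Rightarrow> 2 * n + 2)"

definition crd :: "zidx \<Rightarrow> nat" where
  "crd k = (case k of IZ0 i \<Rightarrow> i | IZh n i \<Rightarrow> i | IZ n i \<Rightarrow> i | IU0 \<Rightarrow> N | IEta n \<Rightarrow> N | IU n \<Rightarrow> N)"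

definition fk :: "zidx \<Rightarrow> real \<Rightarrow> real" where
  "fk k = (case k of IU0 \<Rightarrow> (\<lambda>x. sqrt P0 * x) | IU n \<Rightarrow> (\<lambda>x. B * x) | _ \<Rightarrow> (\<lambda>x. x))"

lemma final_indep:
  "indep_vars (\<lambda>_. borel)
       (\<lambda>k. case k of IZ0 i \<Rightarrow> (\<lambda>\<omega>. out 0 \<omega> i) | IZh n i \<Rightarrow> (\<lambda>\<omega>. out (2 * n + 1) \<omega> i) | IZ n i \<Rightarrow> (\<lambda>\<omega>. out (2 * n + 2) \<omega> i)
                | IU0 \<Rightarrow> ens_u0 N A B C D Xh0 X0 V W xi0 EV EW
                | IEta n \<Rightarrow> (\<lambda>\<omega>. (\<Sum>i<Suc N. EV n i \<omega>) / sqrt (real (Suc N)))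
                | IU n \<Rightarrow> ens_u N A B C D X0 V W xi0 EV EW n)
       ({IZ0 i |i. i < N} \<union> {IZh n i |n i. i < N} \<union> {IZ n i |n i. i < N}
         \<union> {IU0} \<union> range IEta \<union> range IU)"
  (is "indep_vars _ ?X ?K")
proof (rule seq_indep[where H=HH and Mh="\<lambda>T. PiM (past T) (\<lambda>_. borel)" and out=out and psi=psi
      and f=fk and tau=tau and crd=crd and N=N])
  show "\<And>T. indepP (PiM (past T) (\<lambda>_. borel)) (HH T) (BB N) (out T)" using out_props by blast
  show "\<And>T. distr M (BB N) (out T) = gam N" using out_props by blast
  show "\<And>T t. t < T \<Longrightarrow> psi T t \<in> measurable (PiM (past T) (\<lambda>_. borel)) (BB N)" by (rule psi_meas)
  show "\<And>T t \<omega>. t < T \<Longrightarrow> \<omega> \<in> space M \<Longrightarrow> out t \<omega> = psi T t (HH T \<omega>)" by (rule psi_out)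
  show "\<And>k \<omega>. k \<in> ?K \<Longrightarrow> \<omega> \<in> space M \<Longrightarrow> ?X k \<omega> = fk k (out (tau k) \<omega> (crd k))"
    by (auto simp: fk_def tau_def crd_def u0_id u_id eta_id2)
  show "\<And>k. k \<in> ?K \<Longrightarrow> fk k \<in> borel_measurable borel"
    by (auto simp: fk_def)
  show "\<And>k. k \<in> ?K \<Longrightarrow> crd k \<le> N"
    by (auto simp: crd_def)
  show "inj_on (\<lambda>k. (tau k, crd k)) ?K"
    by (rule inj_onI) (auto simp: tau_def crd_def split: zidx.splits; presburger)
qed

end


theorem mainTheorem17:
  fixes M :: "'a measure" and A B C D P0 Xh0 :: real and N :: nat
    and X0 :: "'a \<Rightarrow> real" and V W :: "nat \<Rightarrow> 'a \<Rightarrow> real"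
    and xi0 :: "nat \<Rightarrow> 'a \<Rightarrow> real" and EV EW :: "nat \<Rightarrow> nat \<Rightarrow> 'a \<Rightarrow> real"
  assumes "prob_space M"
    and "A \<noteq> 0" and "B \<noteq> 0" and "C \<noteq> 0" and "D \<noteq> 0" and "P0 > 0" and "N \<ge> 1"
    and "distributed M lborel X0 (normal_density Xh0 (sqrt P0))"
    and "\<And>i. i \<le> N \<Longrightarrow> distributed M lborel (xi0 i) (normal_density Xh0 (sqrt P0))"
    and "\<And>n. distributed M lborel (V n) std_normal_density"
    and "\<And>n. n \<ge> 1 \<Longrightarrow> distributed M lborel (W n) std_normal_density"
    and "\<And>n i. i \<le> N \<Longrightarrow> distributed M lborel (EV n i) std_normal_density"
    and "\<And>n i. n \<ge> 1 \<Longrightarrow> i \<le> N \<Longrightarrow> distributed M lborel (EW n i) std_normal_density"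
    and "prob_space.indep_vars M (\<lambda>_. borel)
           (\<lambda>s. case s of SX0 \<Rightarrow> X0 | SV n \<Rightarrow> V n | SW n \<Rightarrow> W n | SXi i \<Rightarrow> xi0 i
                    | SEV n i \<Rightarrow> EV n i | SEW n i \<Rightarrow> EW n i)
           ({SX0} \<union> range SV \<union> SW ` {1..} \<union> SXi ` {..N}
             \<union> {SEV n i |n i. i \<le> N} \<union> {SEW n i |n i. 1 \<le> n \<and> i \<le> N})"
  defines "R \<equiv> B^2" and "S \<equiv> (C / D)^2"
    and "p \<equiv> ens_p N A B C D X0 V W xi0 EV EW" and "ph \<equiv> ens_ph N A B C D X0 V W xi0 EV EW"
    and "g \<equiv> ens_g N A B C D X0 V W xi0 EV EW"
    and "u0 \<equiv> ens_u0 N A B C D Xh0 X0 V W xi0 EV EW"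
    and "uh \<equiv> ens_uh N A B C D X0 V W xi0 EV EW"
    and "u \<equiv> ens_u N A B C D X0 V W xi0 EV EW"
    and "eta \<equiv> \<lambda>n \<omega>. (\<Sum>i<Suc N. EV n i \<omega>) / sqrt (real (Suc N))"
  shows "\<exists>Z0 Zh Z :: _ \<Rightarrow> _.
     prob_space.indep_vars M (\<lambda>_. borel)
       (\<lambda>k. case k of IZ0 i \<Rightarrow> Z0 i | IZh n i \<Rightarrow> Zh n i | IZ n i \<Rightarrow> Z n i
                | IU0 \<Rightarrow> u0 | IEta n \<Rightarrow> eta n | IU n \<Rightarrow> u n)
       ({IZ0 i |i. i < N} \<union> {IZh n i |n i. i < N} \<union> {IZ n i |n i. i < N}
         \<union> {IU0} \<union> range IEta \<union> range IU)
   \<and> (\<forall>i<N. distributed M lborel (Z0 i) std_normal_density)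
   \<and> (\<forall>n. \<forall>i<N. distributed M lborel (Zh n i) std_normal_density)
   \<and> (\<forall>n. \<forall>i<N. distributed M lborel (Z n i) std_normal_density)
   \<and> (AE \<omega> in M. p 0 \<omega> = P0 / real N * (\<Sum>i<N. (Z0 i \<omega>)^2))
   \<and> (\<forall>n. AE \<omega> in M. ph n \<omega> = (p n \<omega> / (1 + S * p n \<omega>))^2 * (S / real N)
            * (\<Sum>i<N. (Zh n i \<omega> + sqrt (1 / (S * p n \<omega>)))^2))
   \<and> (\<forall>n. AE \<omega> in M. p (Suc n) \<omega> = R / real N
            * (\<Sum>i<N. (Z n i \<omega> + sqrt (A^2 * ph n \<omega> / R))^2))
   \<and> (\<forall>n \<omega>. uh n \<omega> = - g n \<omega> * D * eta n \<omega>)"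
proof -
  interpret E: ek M A B C D P0 Xh0 N X0 V W xi0 EV EW
    by (intro ek.intro ek_axioms.intro) (use assms in auto)
  have om: "E.out T \<in> measurable M (BB N)" and od: "distr M (BB N) (E.out T) = gam N" for T
    using E.out_props[of T] unfolding E.indepP_def by auto
  have dN: "distributed M lborel (\<lambda>\<omega>. E.out T \<omega> i) std_normal_density" if "i < N" for T i
    by (rule E.distributed_N01[OF od _ om]) (use that in simp)
  show ?thesis
  proof (intro exI conjI)
    show "prob_space.indep_vars M (\<lambda>_. borel)
       (\<lambda>k. case k of IZ0 i \<Rightarrow> (\<lambda>i \<omega>. E.out 0 \<omega> i) i | IZh n i \<Rightarrow> (\<lambda>n i \<omega>. E.out (2 * n + 1) \<omega> i) n i
                | IZ n i \<Rightarrow> (\<lambda>n i \<omega>. E.out (2 * n + 2) \<omega> i) n i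
                | IU0 \<Rightarrow> u0 | IEta n \<Rightarrow> eta n | IU n \<Rightarrow> u n)
       ({IZ0 i |i. i < N} \<union> {IZh n i |n i. i < N} \<union> {IZ n i |n i. i < N}
         \<union> {IU0} \<union> range IEta \<union> range IU)"
      unfolding u0_def u_def eta_def using E.final_indep by simp
    show "\<forall>i<N. distributed M lborel ((\<lambda>i \<omega>. E.out 0 \<omega> i) i) std_normal_density"
      using dN by simp
    show "\<forall>n. \<forall>i<N. distributed M lborel ((\<lambda>n i \<omega>. E.out (2 * n + 1) \<omega> i) n i) std_normal_density"
      using dN by simp
    show "\<forall>n. \<forall>i<N. distributed M lborel ((\<lambda>n i \<omega>. E.out (2 * n + 2) \<omega> i) n i) std_normal_density"
      using dN by simp
    show "AE \<omega> in M. p 0 \<omega> = P0 / real N * (\<Sum>i<N. ((\<lambda>i \<omega>. E.out 0 \<omega> i) i \<omega>)^2)"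
      unfolding p_def by (intro AE_I2) (simp add: E.p0_id)
    show "\<forall>n. AE \<omega> in M. ph n \<omega> = (p n \<omega> / (1 + S * p n \<omega>))^2 * (S / real N)
            * (\<Sum>i<N. ((\<lambda>n i \<omega>. E.out (2 * n + 1) \<omega> i) n i \<omega> + sqrt (1 / (S * p n \<omega>)))^2)"
      unfolding p_def ph_def S_def by (intro allI AE_I2) (simp only: E.ph_id)
    show "\<forall>n. AE \<omega> in M. p (Suc n) \<omega> = R / real N
            * (\<Sum>i<N. ((\<lambda>n i \<omega>. E.out (2 * n + 2) \<omega> i) n i \<omega> + sqrt (A^2 * ph n \<omega> / R))^2)"
      unfolding p_def ph_def R_def by (intro allI AE_I2) (simp only: E.pS_id)
    show "\<forall>n \<omega>. uh n \<omega> = - g n \<omega> * D * eta n \<omega>"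
      unfolding uh_def g_def eta_def by (intro allI) (rule E.uh_id)
  qed
qed


end
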